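(* Let $G$ be a compact matrix quantum group with fundamental matrix $u=(u_{ij})_{1\le i,j\le N}$ and let $p\in\mathcal P(\omega,\omega')$ be a two-coloured partition. Then: (1) if the relations $R^{Gr}_p(u)$, $R^{Gr}_{pp^*}(u)$ and $R^{Gr}_{p^*}(u)$ hold, then $R^{Sp}_p(u)$ holds; (2) if $R^{Sp}_p(u)$ and $R^{Sp}_p(u^T)$ hold, then $R^{Gr}_p(u)$ holds. In particular, if $G=G_N(\Pi)$ for a set $\Pi$ of two-coloured partitions containing the four mixed-coloured pair partitions and $p$ belongs to the category $\langle\Pi\rangle$, then $R^{Gr}_p(u)$ holds if and only if both $R^{Sp}_p(u)$ and $R^{Sp}_p(u^T)$ hold.
   Context: $[n]:=\{1,\dots,n\}$; $[N]^0=\{\epsilon\}$. A two-coloured partition on $k$ upper and $l$ lower points is a partition of the $k$ upper and $l$ lower points (each row ordered left to right) into non-empty disjoint blocks, each point coloured $1$ or $*$; $\mathcal P(\omega,\omega')$ denotes those with upper colour word $\omega\in\{1,*\}^k$, lower colour word $\omega'\in\{1,*\}^l$. Through-blocks contain upper and lower points; $tb(p)$ is their number. A row labeling is valid if points of that row in a common block carry equal labels; $\epsilon$ is valid. Decomposition of labelings of $p$: $T_0$/$T'_0$ = invalid upper/lower row labelings; $r=N^{tb(p)}$; enumerate assignments of labels in $[N]$ to through-blocks as $1,\dots,r$; $T_i$/$T'_i$ = valid upper/lower row labelings giving each through-block the label of the $i$-th assignment. $a^1:=a$; empty products equal $\mathbb 1$. Operations: $p^*\in\mathcal P(\omega',\omega)$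 is $p$ reflected so that upper and lower rows are exchanged (colours kept). For $p\in\mathcal P(\omega_1,\omega_2)$ and $q\in\mathcal P(\omega_2,\omega_3)$ the composition $qp\in\mathcal P(\omega_1,\omega_3)$ is obtained by identifying the lower points of $p$ with the upper points of $q$ and taking as blocks the connected components restricted to the upper points of $p$ and lower points of $q$ (components meeting neither are discarded); thus $pp^*\in\mathcal P(\omega',\omega')$. The tensor product places partitions side by side. A category of partitions is a set closed under tensor product, composition and involution and containing the identity partitions (one upper and one lower point of equal colour forming a block) and the four mixed-coloured pair partitions (single blocks of two oppositely coloured points both in the upper row, or both in the lower row); $\langle\Pi\rangle$ is the category generated by $\Pi$. A compact matrix quantum group $G$ is a unital $C^*$-algebra $C(G)$ generated by the entries of an $N\times N$ matrix $u=(u_{ij})$ such that $u$ and $\bar u=(u_{ij}^* )$ are invertible and there is a $*$-homomorphism $\Delta:C(G)\to C(G)\otimes C(G)$ with $\Delta(u_{ij})=\sum_k u_{ik}\otimes u_{kj}$. Relations $R^{Gr}_p(u)$: (i) $\sum_{t\in T_i}u_{t_1\gamma_1}^{\omega_1}\cdots u_{t_k\gamma_k}^{\omega_k}=\sum_{t'\in T'_j}u_{\gamma'_1t'_1}^{\omega'_1}\cdots u_{\gamma'_lt'_l}^{\omega'_l}$ for $1\le i,j\le r$, $\gamma\in T_j$, $\gamma'\in T'_i$; (ii) $\sum_{t\in T_i}u_{t_1\gamma_1}^{\omega_1}\cdots u_{t_k\gamma_k}^{\omega_k}=0$ for $\gamma\in T_0$; (iii) $\sum_{t'\in T'_j}u_{\gamma'_1t'_1}^{\omega'_1}\cdots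 u_{\gamma'_lt'_l}^{\omega'_l}=0$ for $\gamma'\in T'_0$. Relations $R^{Sp}_p(y)$ for a family $y=(y_{ij})_{i\in[N],j\in[d]}$ ($d\le N$): (i) $\sum_{t\in T_i}y_{t_1\gamma_1}^{\omega_1}\cdots y_{t_k\gamma_k}^{\omega_k}=\sum_{t'\in T'_i}y_{t'_1\gamma'_1}^{\omega'_1}\cdots y_{t'_l\gamma'_l}^{\omega'_l}$ for $1\le i,j\le r$, $\gamma\in T_j\cap[d]^k$, $\gamma'\in T'_j\cap[d]^l$; (ii) $\sum_{t\in T_i}y_{t_1\gamma_1}^{\omega_1}\cdots y_{t_k\gamma_k}^{\omega_k}=0$ for $1\le i\le r$, $\gamma\in T_0\cap[d]^k$; (iii) $\sum_{t'\in T'_i}y_{t'_1\gamma'_1}^{\omega'_1}\cdots y_{t'_l\gamma'_l}^{\omega'_l}=0$ for $1\le i\le r$, $\gamma'\in T'_0\cap[d]^l$. Here $R^{Sp}_p(u)$ means this with $d=N$ and $y_{ij}=u_{ij}$; $R^{Sp}_p(u^T)$ means $d=N$ and $y_{ij}=u_{ji}$. $C(G_N(\Pi))$: universal unital $C^*$-algebra generated by $u_{ij}$ subject to $R^{Gr}_p(u)$, $p\in\Pi$ (easy quantum group); it is known that then $R^{Gr}_q(u)$ holds for all $q\in\langle\Pi\rangle$, and these relations also hold for $u^T$ in place of $u$. *)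

theory Defs
  imports Complex_Main "HOL-Library.FuncSet" "HOL-Library.Disjoint_Sets"
begin

section \<open>Two-coloured partitions\<close>

text \<open>Colours: C1 is the colour 1, CS is the colour *.\<close>
datatype col = C1 | CS

text \<open>Points: U i is the (i+1)-th upper point, L j the (j+1)-th lower point (0-based).\<close>
datatype pt = U nat | L nat

datatype tcpart = TCP (up: "col list") (lo: "col list") (blks: "pt set set")

definition pts :: "tcpart \<Rightarrow> pt set" where
  "pts p = U ` {..<length (up p)} \<union> L ` {..<length (lo p)}"

definition is_tcpart :: "tcpart \<Rightarrow> bool" where
  "is_tcpart p \<longleftrightarrow> partition_on (pts p) (blks p)"

definition sameblk :: "tcpart \<Rightarrow> pt \<Rightarrow> pt \<Rightarrow> bool" where
  "sameblk p x y \<longleftrightarrow> (\<exists>B\<in>blks p. x \<in> B \<and> y \<in> B)"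

fun flip_pt :: "pt \<Rightarrow> pt" where
  "flip_pt (U i) = L i" | "flip_pt (L j) = U j"

definition pinv :: "tcpart \<Rightarrow> tcpart" where
  "pinv p = TCP (lo p) (up p) ((\<lambda>B. flip_pt ` B) ` blks p)"

fun shift_pt :: "nat \<Rightarrow> nat \<Rightarrow> pt \<Rightarrow> pt" where
  "shift_pt a b (U i) = U (i + a)" | "shift_pt a b (L j) = L (j + b)"

definition ptens :: "tcpart \<Rightarrow> tcpart \<Rightarrow> tcpart" where
  "ptens p q = TCP (up p @ up q) (lo p @ lo q)
     (blks p \<union> (\<lambda>B. shift_pt (length (up p)) (length (lo p)) ` B) ` blks q)"

text \<open>Three rows used for composition: top (upper row of p), middle (lower row of p =
  upper row of q), bottom (lower row of q).\<close>
datatype pt3 = Tp nat | Md nat | Bt nat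

fun emb_top :: "pt \<Rightarrow> pt3" where
  "emb_top (U i) = Tp i" | "emb_top (L j) = Md j"

fun emb_bot :: "pt \<Rightarrow> pt3" where
  "emb_bot (U j) = Md j" | "emb_bot (L m) = Bt m"

definition cedges :: "tcpart \<Rightarrow> tcpart \<Rightarrow> (pt3 \<times> pt3) set" where
  "cedges q p = {(emb_top x, emb_top y) | x y. sameblk p x y}
              \<union> {(emb_bot x, emb_bot y) | x y. sameblk q x y}"

text \<open>Composition qp (p on top, q below): blocks are the connected components restricted
  to the upper points of p and lower points of q; components meeting neither are discarded.\<close>
definition pcomp :: "tcpart \<Rightarrow> tcpart \<Rightarrow> tcpart" where
  "pcomp q p = TCP (up p) (lo q)
     { {U i | i. (x, Tp i) \<in> (cedges q p)\<^sup>*} \<union> {L m | m. (x, Bt m) \<in> (cedges q p)\<^sup>*}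
       | x. x \<in> Tp ` {..<length (up p)} \<union> Bt ` {..<length (lo q)} }"

definition idpart :: "col \<Rightarrow> tcpart" where
  "idpart c = TCP [c] [c] {{U 0, L 0}}"

definition mixed_pairs :: "tcpart set" where
  "mixed_pairs = { TCP [C1, CS] [] {{U 0, U 1}}, TCP [CS, C1] [] {{U 0, U 1}},
                   TCP [] [C1, CS] {{L 0, L 1}}, TCP [] [CS, C1] {{L 0, L 1}} }"

inductive_set cat_gen :: "tcpart set \<Rightarrow> tcpart set" for Pis :: "tcpart set" where
  gen_base: "q \<in> Pis \<Longrightarrow> q \<in> cat_gen Pis"
| gen_id: "idpart c \<in> cat_gen Pis"
| gen_pair: "q \<in> mixed_pairs \<Longrightarrow> q \<in> cat_gen Pis"
| gen_tens: "q1 \<in> cat_gen Pis \<Longrightarrow> q2 \<in> cat_gen Pis \<Longrightarrow> ptens q1 q2 \<in> cat_gen Pis"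
| gen_comp: "p \<in> cat_gen Pis \<Longrightarrow> q \<in> cat_gen Pis \<Longrightarrow> lo p = up q \<Longrightarrow> pcomp q p \<in> cat_gen Pis"
| gen_inv: "q \<in> cat_gen Pis \<Longrightarrow> pinv q \<in> cat_gen Pis"

section \<open>Labelings\<close>

text \<open>[N]^k as lists of length k with entries in {1..N}.\<close>
definition labs :: "nat \<Rightarrow> nat \<Rightarrow> nat list set" where
  "labs N k = {t. length t = k \<and> set t \<subseteq> {1..N}}"

definition valid_up :: "tcpart \<Rightarrow> nat list \<Rightarrow> bool" where
  "valid_up p t \<longleftrightarrow> (\<forall>a<length t. \<forall>b<length t. sameblk p (U a) (U b) \<longrightarrow> t ! a = t ! b)"

definition valid_lo :: "tcpart \<Rightarrow> nat list \<Rightarrow> bool" where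
  "valid_lo p t \<longleftrightarrow> (\<forall>a<length t. \<forall>b<length t. sameblk p (L a) (L b) \<longrightarrow> t ! a = t ! b)"

definition tblocks :: "tcpart \<Rightarrow> pt set set" where
  "tblocks p = {B \<in> blks p. (\<exists>i. U i \<in> B) \<and> (\<exists>j. L j \<in> B)}"

text \<open>Assignments of labels in [N] to the through-blocks (the r = N^tb(p) indices).\<close>
definition assigns :: "nat \<Rightarrow> tcpart \<Rightarrow> (pt set \<Rightarrow> nat) set" where
  "assigns N p = tblocks p \<rightarrow>\<^sub>E {1..N}"

definition T0u :: "nat \<Rightarrow> tcpart \<Rightarrow> nat list set" where
  "T0u N p = {t \<in> labs N (length (up p)). \<not> valid_up p t}"

definition T0l :: "nat \<Rightarrow> tcpart \<Rightarrow> nat list set" where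
  "T0l N p = {t \<in> labs N (length (lo p)). \<not> valid_lo p t}"

definition Tu :: "nat \<Rightarrow> tcpart \<Rightarrow> (pt set \<Rightarrow> nat) \<Rightarrow> nat list set" where
  "Tu N p f = {t \<in> labs N (length (up p)). valid_up p t \<and>
                (\<forall>B\<in>tblocks p. \<forall>i<length t. U i \<in> B \<longrightarrow> t ! i = f B)}"

definition Tl :: "nat \<Rightarrow> tcpart \<Rightarrow> (pt set \<Rightarrow> nat) \<Rightarrow> nat list set" where
  "Tl N p f = {t \<in> labs N (length (lo p)). valid_lo p t \<and>
                (\<forall>B\<in>tblocks p. \<forall>i<length t. L i \<in> B \<longrightarrow> t ! i = f B)}"

section \<open>Relations\<close>

fun cpow :: "('a \<Rightarrow> 'a) \<Rightarrow> col \<Rightarrow> 'a \<Rightarrow> 'a" where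
  "cpow st C1 x = x" | "cpow st CS x = st x"

definition monom :: "('a::monoid_mult \<Rightarrow> 'a) \<Rightarrow> col list \<Rightarrow> (nat \<Rightarrow> nat \<Rightarrow> 'a)
                      \<Rightarrow> nat list \<Rightarrow> nat list \<Rightarrow> 'a" where
  "monom st w y a b = prod_list (map (\<lambda>m. cpow st (w ! m) (y (a ! m) (b ! m))) [0..<length w])"

definition RGr :: "('a::ring_1 \<Rightarrow> 'a) \<Rightarrow> nat \<Rightarrow> tcpart \<Rightarrow> (nat \<Rightarrow> nat \<Rightarrow> 'a) \<Rightarrow> bool" where
  "RGr st N p u \<longleftrightarrow>
     (\<forall>f\<in>assigns N p. \<forall>g\<in>assigns N p. \<forall>\<gamma>\<in>Tu N p g. \<forall>\<gamma>'\<in>Tl N p f.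
        (\<Sum>t\<in>Tu N p f. monom st (up p) u t \<gamma>) = (\<Sum>t'\<in>Tl N p g. monom st (lo p) u \<gamma>' t'))
   \<and> (\<forall>f\<in>assigns N p. \<forall>\<gamma>\<in>T0u N p. (\<Sum>t\<in>Tu N p f. monom st (up p) u t \<gamma>) = 0)
   \<and> (\<forall>g\<in>assigns N p. \<forall>\<gamma>'\<in>T0l N p. (\<Sum>t'\<in>Tl N p g. monom st (lo p) u \<gamma>' t') = 0)"

text \<open>R^Sp_p(y) for y = (y_ij), i in [N], j in [d].\<close>
definition RSp :: "('a::ring_1 \<Rightarrow> 'a) \<Rightarrow> nat \<Rightarrow> nat \<Rightarrow> tcpart \<Rightarrow> (nat \<Rightarrow> nat \<Rightarrow> 'a) \<Rightarrow> bool" where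
  "RSp st N d p y \<longleftrightarrow>
     (\<forall>f\<in>assigns N p. \<forall>g\<in>assigns N p.
        \<forall>\<gamma>\<in>Tu N p g \<inter> labs d (length (up p)). \<forall>\<gamma>'\<in>Tl N p g \<inter> labs d (length (lo p)).
        (\<Sum>t\<in>Tu N p f. monom st (up p) y t \<gamma>) = (\<Sum>t'\<in>Tl N p f. monom st (lo p) y t' \<gamma>'))
   \<and> (\<forall>f\<in>assigns N p. \<forall>\<gamma>\<in>T0u N p \<inter> labs d (length (up p)).
        (\<Sum>t\<in>Tu N p f. monom st (up p) y t \<gamma>) = 0)
   \<and> (\<forall>f\<in>assigns N p. \<forall>\<gamma>'\<in>T0l N p \<inter> labs d (length (lo p)).
        (\<Sum>t'\<in>Tl N p f. monom st (lo p) y t' \<gamma>') = 0)"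

section \<open>Unital C*-algebras\<close>

text \<open>A complex unital Banach algebra is encoded as a real unital Banach algebra together
  with a central element iu (the imaginary unit) with iu*iu = -1 for which the norm is
  complex-homogeneous; complex scalar multiplication is cscale.\<close>
definition cscale :: "'a::real_algebra_1 \<Rightarrow> complex \<Rightarrow> 'a \<Rightarrow> 'a" where
  "cscale iu c x = Re c *\<^sub>R x + Im c *\<^sub>R (iu * x)"

definition cstar :: "('a::{real_normed_algebra_1,banach} \<Rightarrow> 'a) \<Rightarrow> 'a \<Rightarrow> bool" where
  "cstar st iu \<longleftrightarrow>
     (\<forall>x. iu * x = x * iu) \<and> iu * iu = - 1 \<and>
     (\<forall>c x. norm (cscale iu c x) = cmod c * norm x) \<and>
     (\<forall>x. st (st x) = x) \<and> (\<forall>x y. st (x + y) = st x + st y) \<and>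
     (\<forall>x y. st (x * y) = st y * st x) \<and> (\<forall>c x. st (cscale iu c x) = cscale iu (cnj c) (st x)) \<and>
     (\<forall>x. norm (st x * x) = (norm x)\<^sup>2)"

definition star_hom :: "('a::{real_normed_algebra_1,banach} \<Rightarrow> 'a) \<Rightarrow> 'a
     \<Rightarrow> ('b::{real_normed_algebra_1,banach} \<Rightarrow> 'b) \<Rightarrow> 'b \<Rightarrow> ('a \<Rightarrow> 'b) \<Rightarrow> bool" where
  "star_hom st iu st' iu' h \<longleftrightarrow>
     (\<forall>x y. h (x + y) = h x + h y) \<and> (\<forall>x y. h (x * y) = h x * h y) \<and>
     (\<forall>c x. h (cscale iu c x) = cscale iu' c (h x)) \<and> (\<forall>x. h (st x) = st' (h x))"

definition unital_star_hom :: "('a::{real_normed_algebra_1,banach} \<Rightarrow> 'a) \<Rightarrow> 'a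
     \<Rightarrow> ('b::{real_normed_algebra_1,banach} \<Rightarrow> 'b) \<Rightarrow> 'b \<Rightarrow> ('a \<Rightarrow> 'b) \<Rightarrow> bool" where
  "unital_star_hom st iu st' iu' h \<longleftrightarrow> star_hom st iu st' iu' h \<and> h 1 = 1"

definition cstar_gen :: "('a::{real_normed_algebra_1,banach} \<Rightarrow> 'a) \<Rightarrow> 'a \<Rightarrow> 'a set \<Rightarrow> bool" where
  "cstar_gen st iu G \<longleftrightarrow>
     (\<forall>S. closed S \<and> G \<subseteq> S \<and> 1 \<in> S \<and> (\<forall>x\<in>S. \<forall>y\<in>S. x + y \<in> S \<and> x * y \<in> S) \<and>
          (\<forall>x\<in>S. st x \<in> S \<and> (\<forall>c. cscale iu c x \<in> S)) \<longrightarrow> S = UNIV)"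

text \<open>(st', iu') on 'b with i1, i2 is a C*-tensor product of the C*-algebra (st, iu) with
  itself: a C*-algebra containing commuting copies i1(A), i2(A), generated by the products
  i1 a * i2 b, such that the induced map on the algebraic tensor product is injective.\<close>
definition cstar_tensor :: "('a::{real_normed_algebra_1,banach} \<Rightarrow> 'a) \<Rightarrow> 'a
     \<Rightarrow> ('b::{real_normed_algebra_1,banach} \<Rightarrow> 'b) \<Rightarrow> 'b \<Rightarrow> ('a \<Rightarrow> 'b) \<Rightarrow> ('a \<Rightarrow> 'b) \<Rightarrow> bool" where
  "cstar_tensor st iu st' iu' i1 i2 \<longleftrightarrow>
     cstar st' iu' \<and> unital_star_hom st iu st' iu' i1 \<and> unital_star_hom st iu st' iu' i2 \<and>
     (\<forall>a b. i1 a * i2 b = i2 b * i1 a) \<and>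
     cstar_gen st' iu' {i1 a * i2 b | a b. True} \<and>
     (\<forall>(n::nat) a b. (\<forall>c. (\<Sum>k<n. cscale iu (c k) (a k)) = 0 \<longrightarrow> (\<forall>k<n. c k = 0)) \<and>
        (\<Sum>k<n. i1 (a k) * i2 (b k)) = 0 \<longrightarrow> (\<forall>k<n. b k = 0))"

definition minvertible :: "nat \<Rightarrow> (nat \<Rightarrow> nat \<Rightarrow> 'a::ring_1) \<Rightarrow> bool" where
  "minvertible N u \<longleftrightarrow> (\<exists>v. \<forall>i\<in>{1..N}. \<forall>j\<in>{1..N}.
      (\<Sum>k=1..N. u i k * v k j) = (if i = j then 1 else 0) \<and>
      (\<Sum>k=1..N. v i k * u k j) = (if i = j then 1 else 0))"

text \<open>Compact matrix quantum group: C(G) is the C*-algebra (st, iu) on 'a with fundamental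
  matrix u; the comultiplication goes into a C*-tensor product C(G) \<otimes> C(G) realised on
  some C*-algebra of type 'b.\<close>
definition cmqg :: "('a::{real_normed_algebra_1,banach} \<Rightarrow> 'a) \<Rightarrow> 'a \<Rightarrow> nat
     \<Rightarrow> (nat \<Rightarrow> nat \<Rightarrow> 'a) \<Rightarrow> 'b::{real_normed_algebra_1,banach} itself \<Rightarrow> bool" where
  "cmqg st iu N u (_::'b itself) \<longleftrightarrow>
     cstar st iu \<and>
     cstar_gen st iu {u i j | i j. i \<in> {1..N} \<and> j \<in> {1..N}} \<and>
     minvertible N u \<and> minvertible N (\<lambda>i j. st (u i j)) \<and>
     (\<exists>(st'::'b \<Rightarrow> 'b) iu' i1 i2 \<Delta>. cstar_tensor st iu st' iu' i1 i2 \<and>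
        star_hom st iu st' iu' \<Delta> \<and>
        (\<forall>i\<in>{1..N}. \<forall>j\<in>{1..N}. \<Delta> (u i j) = (\<Sum>k=1..N. i1 (u i k) * i2 (u k j))))"

text \<open>C(G) = C(G_N(Pis)): u satisfies R^Gr_p(u) for p in Pis, generates, and is universal
  among such families in C*-algebras (realised on the type 'c).\<close>
definition is_GN :: "('a::{real_normed_algebra_1,banach} \<Rightarrow> 'a) \<Rightarrow> 'a \<Rightarrow> nat
     \<Rightarrow> (nat \<Rightarrow> nat \<Rightarrow> 'a) \<Rightarrow> tcpart set \<Rightarrow> 'c::{real_normed_algebra_1,banach} itself \<Rightarrow> bool" where
  "is_GN st iu N u Pis (_::'c itself) \<longleftrightarrow>
     (\<forall>q\<in>Pis. RGr st N q u) \<and>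
     cstar_gen st iu {u i j | i j. i \<in> {1..N} \<and> j \<in> {1..N}} \<and>
     (\<forall>(st'::'c \<Rightarrow> 'c) iu' v. cstar st' iu' \<and> (\<forall>q\<in>Pis. RGr st' N q v) \<longrightarrow>
        (\<exists>h. unital_star_hom st iu st' iu' h \<and>
             (\<forall>i\<in>{1..N}. \<forall>j\<in>{1..N}. h (u i j) = v i j)))"

end

theory Submission
  imports Defs
begin


definition disjp :: "tcpart \<Rightarrow> bool" where
  "disjp p \<longleftrightarrow> (\<forall>B1\<in>blks p. \<forall>B2\<in>blks p. \<forall>x. x \<in> B1 \<longrightarrow> x \<in> B2 \<longrightarrow> B1 = B2)"

lemma tc_disj: "is_tcpart p \<Longrightarrow> disjp p"
  unfolding is_tcpart_def disjp_def partition_on_def pairwise_def disjnt_def by blast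

lemma tc_sub: "is_tcpart p \<Longrightarrow> B \<in> blks p \<Longrightarrow> B \<subseteq> pts p"
  unfolding is_tcpart_def partition_on_def by blast

lemma tc_cover: "is_tcpart p \<Longrightarrow> x \<in> pts p \<Longrightarrow> \<exists>B\<in>blks p. x \<in> B"
  unfolding is_tcpart_def partition_on_def by blast

lemma sb_sym: "sameblk p x y \<Longrightarrow> sameblk p y x"
  unfolding sameblk_def by blast

lemma sb_trans: "disjp p \<Longrightarrow> sameblk p x y \<Longrightarrow> sameblk p y z \<Longrightarrow> sameblk p x z"
  unfolding sameblk_def disjp_def by metis

lemma sb_refl: "is_tcpart p \<Longrightarrow> x \<in> pts p \<Longrightarrow> sameblk p x x"
  unfolding sameblk_def using tc_cover by blast

lemma pts_U: "U i \<in> pts p \<longleftrightarrow> i < length (up p)"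
  unfolding pts_def by auto
lemma pts_L: "L i \<in> pts p \<longleftrightarrow> i < length (lo p)"
  unfolding pts_def by auto

lemma sb_pts: "is_tcpart p \<Longrightarrow> sameblk p x y \<Longrightarrow> x \<in> pts p \<and> y \<in> pts p"
  unfolding sameblk_def using tc_sub by blast

definition validr :: "tcpart \<Rightarrow> (nat \<Rightarrow> pt) \<Rightarrow> nat list \<Rightarrow> bool" where
  "validr p C t \<longleftrightarrow> (\<forall>a<length t. \<forall>b<length t. sameblk p (C a) (C b) \<longrightarrow> t ! a = t ! b)"

definition Tr :: "nat \<Rightarrow> tcpart \<Rightarrow> (nat \<Rightarrow> pt) \<Rightarrow> nat \<Rightarrow> (pt set \<Rightarrow> nat) \<Rightarrow> nat list set" where
  "Tr N p C n f = {t \<in> labs N n. validr p C t \<and> (\<forall>B\<in>tblocks p. \<forall>i<length t. C i \<in> B \<longrightarrow> t ! i = f B)}"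

lemma Tu_Tr: "Tu N p f = Tr N p U (length (up p)) f"
  by (simp add: Tu_def Tr_def validr_def valid_up_def)
lemma Tl_Tr: "Tl N p f = Tr N p L (length (lo p)) f"
  by (simp add: Tl_def Tr_def validr_def valid_lo_def)
lemma T0u_eq: "T0u N p = {t \<in> labs N (length (up p)). \<not> validr p U t}"
  by (simp add: T0u_def validr_def valid_up_def)
lemma T0l_eq: "T0l N p = {t \<in> labs N (length (lo p)). \<not> validr p L t}"
  by (simp add: T0l_def validr_def valid_lo_def)

lemma finite_labs: "finite (labs N n)"
proof -
  have "labs N n = {xs. set xs \<subseteq> {1..N} \<and> length xs = n}" unfolding labs_def by auto
  thus ?thesis using finite_lists_length_eq[of "{1..N}" n] by simp
qed

lemma finite_Tr: "finite (Tr N p C n f)"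
  by (rule finite_subset[OF _ finite_labs[of N n]]) (auto simp: Tr_def)

lemma Tr_labs: "t \<in> Tr N p C n f \<Longrightarrow> t \<in> labs N n"
  by (auto simp: Tr_def)

lemma labs_len: "t \<in> labs N n \<Longrightarrow> length t = n"
  by (auto simp: labs_def)

definition rl :: "tcpart \<Rightarrow> (nat \<Rightarrow> pt) \<Rightarrow> (pt set \<Rightarrow> nat) \<Rightarrow> nat list \<Rightarrow> nat list" where
  "rl p C g t = map (\<lambda>i. if \<exists>B\<in>tblocks p. C i \<in> B then g (SOME B. B \<in> tblocks p \<and> C i \<in> B) else t ! i) [0..<length t]"

lemma tblocks_blks: "B \<in> tblocks p \<Longrightarrow> B \<in> blks p"
  by (simp add: tblocks_def)

lemma some_tb: "disjp p \<Longrightarrow> B \<in> tblocks p \<Longrightarrow> x \<in> B \<Longrightarrow> (SOME B. B \<in> tblocks p \<and> x \<in> B) = B"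
  apply (rule some_equality) apply simp
  using tblocks_blks unfolding disjp_def by blast

lemma rl_len[simp]: "length (rl p C g t) = length t"
  by (simp add: rl_def)

lemma rl_nth: "i < length t \<Longrightarrow> rl p C g t ! i = (if \<exists>B\<in>tblocks p. C i \<in> B then g (SOME B. B \<in> tblocks p \<and> C i \<in> B) else t ! i)"
  by (simp add: rl_def)

lemma rl_thr: "disjp p \<Longrightarrow> B \<in> tblocks p \<Longrightarrow> C i \<in> B \<Longrightarrow> i < length t \<Longrightarrow> rl p C g t ! i = g B"
  using rl_nth some_tb by fastforce

lemma rl_nthr: "\<not> (\<exists>B\<in>tblocks p. C i \<in> B) \<Longrightarrow> i < length t \<Longrightarrow> rl p C g t ! i = t ! i"
  using rl_nth by fastforce

lemma rl_labs: assumes "g \<in> assigns N p" "t \<in> labs N n" shows "rl p C g t \<in> labs N n"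
proof -
  have "\<forall>i<length t. rl p C g t ! i \<in> {1..N}"
  proof (intro allI impI)
    fix i assume i: "i < length t"
    show "rl p C g t ! i \<in> {1..N}"
    proof (cases "\<exists>B\<in>tblocks p. C i \<in> B")
      case True
      then obtain B where B: "B \<in> tblocks p" "C i \<in> B" by blast
      hence "(SOME B. B \<in> tblocks p \<and> C i \<in> B) \<in> tblocks p" by (metis (mono_tags, lifting) someI)
      thus ?thesis using True i assms(1) by (simp add: rl_nth assigns_def PiE_iff)
    next
      case False thus ?thesis using i assms(2) by (simp add: rl_nth labs_def subset_iff)
    qed
  qed
  thus ?thesis using assms(2) by (auto simp: labs_def in_set_conv_nth)
qed

lemma rl_valid: assumes d: "disjp p" and v: "validr p C t" shows "validr p C (rl p C g t)"
  unfolding validr_def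
proof (intro allI impI)
  fix a b assume a: "a < length (rl p C g t)" and b: "b < length (rl p C g t)" and s: "sameblk p (C a) (C b)"
  then obtain B0 where B0: "B0 \<in> blks p" "C a \<in> B0" "C b \<in> B0" unfolding sameblk_def by blast
  show "rl p C g t ! a = rl p C g t ! b"
  proof (cases "\<exists>B\<in>tblocks p. C a \<in> B")
    case True
    then obtain B where B: "B \<in> tblocks p" "C a \<in> B" by blast
    hence "B = B0" using d B0 tblocks_blks unfolding disjp_def by blast
    have 1: "rl p C g t ! a = g B" using rl_thr[OF d B(1)] B(2) a by simp
    have 2: "rl p C g t ! b = g B" using rl_thr[OF d B(1)] B0 \<open>B = B0\<close> b by simp
    show ?thesis using 1 2 by simp
  next
    case False
    have F2: "\<not> (\<exists>B\<in>tblocks p. C b \<in> B)"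
    proof
      assume "\<exists>B\<in>tblocks p. C b \<in> B"
      then obtain B where B: "B \<in> tblocks p" "C b \<in> B" by blast
      hence "B = B0" using d B0 tblocks_blks unfolding disjp_def by blast
      thus False using False B B0 by blast
    qed
    have 1: "rl p C g t ! a = t ! a" using rl_nthr[where p=p and C=C and i=a, OF False] a by simp
    have 2: "rl p C g t ! b = t ! b" using rl_nthr[where p=p and C=C and i=b, OF F2] b by simp
    show ?thesis using 1 2 a b v s unfolding validr_def by simp
  qed
qed

lemma rl_in: assumes "disjp p" "g \<in> assigns N p" "t \<in> labs N n" "validr p C t"
  shows "rl p C g t \<in> Tr N p C n g"
  unfolding Tr_def using rl_labs[OF assms(2,3)] rl_valid[OF assms(1,4)] rl_thr[OF assms(1)] by auto

lemma rl_id: assumes "t \<in> Tr N p C n f" shows "rl p C f t = t"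
proof (rule nth_equalityI)
  show "length (rl p C f t) = length t" by simp
  fix i assume i: "i < length (rl p C f t)"
  show "rl p C f t ! i = t ! i"
  proof (cases "\<exists>B\<in>tblocks p. C i \<in> B")
    case True
    then obtain B where B: "B \<in> tblocks p" "C i \<in> B" by blast
    hence S: "(SOME B. B \<in> tblocks p \<and> C i \<in> B) \<in> tblocks p \<and> C i \<in> (SOME B. B \<in> tblocks p \<and> C i \<in> B)"
      by (metis (mono_tags, lifting) someI)
    thus ?thesis using assms i True unfolding Tr_def by (auto simp: rl_nth)
  next
    case False thus ?thesis using i by (simp add: rl_nthr)
  qed
qed

lemma rl_rl: "rl p C f (rl p C g t) = rl p C f t"
  by (rule nth_equalityI) (auto simp: rl_nth)

lemma rl_bij: assumes "disjp p" "f \<in> assigns N p" "g \<in> assigns N p"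
  shows "bij_betw (rl p C g) (Tr N p C n f) (Tr N p C n g)"
proof (rule bij_betw_byWitness[where f' = "rl p C f"])
  show "\<forall>a\<in>Tr N p C n f. rl p C f (rl p C g a) = a" using rl_rl rl_id by metis
  show "\<forall>a\<in>Tr N p C n g. rl p C g (rl p C f a) = a" using rl_rl rl_id by metis
  show "rl p C g ` Tr N p C n f \<subseteq> Tr N p C n g"
    using rl_in[OF assms(1,3)] unfolding Tr_def by blast
  show "rl p C f ` Tr N p C n g \<subseteq> Tr N p C n f"
    using rl_in[OF assms(1,2)] unfolding Tr_def by blast
qed

lemma card_Tr: "disjp p \<Longrightarrow> f \<in> assigns N p \<Longrightarrow> g \<in> assigns N p \<Longrightarrow> card (Tr N p C n f) = card (Tr N p C n g)"
  using rl_bij bij_betw_same_card by blast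

lemma Tr_ne: assumes "disjp p" "f \<in> assigns N p" "N \<ge> 1" shows "\<exists>t. t \<in> Tr N p C n f"
proof -
  have "replicate n 1 \<in> labs N n" using assms(3) by (auto simp: labs_def)
  moreover have "validr p C (replicate n 1)" by (simp add: validr_def)
  ultimately show ?thesis using rl_in[OF assms(1,2)] by blast
qed

lemma assigns0: "f \<in> assigns 0 p \<Longrightarrow> g \<in> assigns 0 p \<Longrightarrow> f = g"
  unfolding assigns_def by (cases "tblocks p = {}") auto

lemma labs0: "t \<in> labs 0 n \<Longrightarrow> n = 0 \<and> t = []"
  unfolding labs_def by (cases t) auto



lemma flip_flip[simp]: "flip_pt (flip_pt x) = x" by (cases x) auto
lemma flip_img_img[simp]: "flip_pt ` flip_pt ` B = B" by (force simp: image_image)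
lemma mem_flip_img: "x \<in> flip_pt ` B \<longleftrightarrow> flip_pt x \<in> B" by force

lemma up_pinv[simp]: "up (pinv p) = lo p" by (simp add: pinv_def)
lemma lo_pinv[simp]: "lo (pinv p) = up p" by (simp add: pinv_def)
lemma blks_pinv: "blks (pinv p) = (`) flip_pt ` blks p" by (simp add: pinv_def)

lemma pinv_pinv[simp]: "pinv (pinv p) = p"
  by (cases p) (simp add: pinv_def image_image)

lemma sameblk_pinv: "sameblk (pinv p) x y \<longleftrightarrow> sameblk p (flip_pt x) (flip_pt y)"
  unfolding sameblk_def blks_pinv by (auto simp: mem_flip_img)

lemma validr_pinvU: "validr (pinv p) U t \<longleftrightarrow> validr p L t"
  by (simp add: validr_def sameblk_pinv)
lemma validr_pinvL: "validr (pinv p) L t \<longleftrightarrow> validr p U t"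
  by (simp add: validr_def sameblk_pinv)

lemma blks_pinv_iff: "B' \<in> blks (pinv p) \<longleftrightarrow> flip_pt ` B' \<in> blks p"
  unfolding blks_pinv by (metis flip_img_img image_eqI image_iff)

lemma tblocks_pinv: "B' \<in> tblocks (pinv p) \<longleftrightarrow> flip_pt ` B' \<in> tblocks p"
  unfolding tblocks_def by (auto simp: blks_pinv_iff mem_flip_img)

lemma pinv_disj: "disjp p \<Longrightarrow> disjp (pinv p)"
  unfolding disjp_def blks_pinv by (auto simp: mem_flip_img)

lemma pinv_corr: assumes f: "f \<in> assigns N p"
  shows "\<exists>f'\<in>assigns N (pinv p). (\<forall>n. Tr N (pinv p) U n f' = Tr N p L n f \<and> Tr N (pinv p) L n f' = Tr N p U n f)"
proof -
  define f' where "f' = (\<lambda>B'. if B' \<in> tblocks (pinv p) then f (flip_pt ` B') else undefined)"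
  have "f' \<in> assigns N (pinv p)" using f unfolding assigns_def f'_def by (auto simp: tblocks_pinv)
  moreover have A: "(\<forall>B'\<in>tblocks (pinv p). \<forall>i<length t. C i \<in> B' \<longrightarrow> t ! i = f' B') \<longleftrightarrow>
        (\<forall>B\<in>tblocks p. \<forall>i<length t. flip_pt (C i) \<in> B \<longrightarrow> t ! i = f B)" for t and C :: "nat \<Rightarrow> pt"
  proof
    assume H: "\<forall>B'\<in>tblocks (pinv p). \<forall>i<length t. C i \<in> B' \<longrightarrow> t ! i = f' B'"
    show "\<forall>B\<in>tblocks p. \<forall>i<length t. flip_pt (C i) \<in> B \<longrightarrow> t ! i = f B"
    proof (intro ballI allI impI)
      fix B i assume B: "B \<in> tblocks p" "i < length t" "flip_pt (C i) \<in> B"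
      have "flip_pt ` B \<in> tblocks (pinv p)" using B by (simp add: tblocks_pinv)
      moreover have "C i \<in> flip_pt ` B" using B by (simp add: mem_flip_img)
      ultimately show "t ! i = f B" using H B by (auto simp: f'_def)
    qed
  next
    assume H: "\<forall>B\<in>tblocks p. \<forall>i<length t. flip_pt (C i) \<in> B \<longrightarrow> t ! i = f B"
    show "\<forall>B'\<in>tblocks (pinv p). \<forall>i<length t. C i \<in> B' \<longrightarrow> t ! i = f' B'"
      using H by (auto simp: f'_def tblocks_pinv mem_flip_img[symmetric])
  qed
  have "Tr N (pinv p) U n f' = Tr N p L n f" for n
    unfolding Tr_def validr_pinvU using A[of _ U] by simp
  moreover have "Tr N (pinv p) L n f' = Tr N p U n f" for n
    unfolding Tr_def validr_pinvL using A[of _ L] by simp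
  ultimately show ?thesis by blast
qed

lemma pinv_corr2: assumes f: "f' \<in> assigns N (pinv p)"
  shows "\<exists>f\<in>assigns N p. (\<forall>n. Tr N (pinv p) U n f' = Tr N p L n f \<and> Tr N (pinv p) L n f' = Tr N p U n f)"
proof -
  obtain f where f: "f \<in> assigns N p" "\<forall>n. Tr N p U n f = Tr N (pinv p) L n f' \<and> Tr N p L n f = Tr N (pinv p) U n f'"
    using pinv_corr[OF assms, unfolded pinv_pinv] by blast
  thus ?thesis by auto
qed

lemma monom_T: "monom st w (\<lambda>i j. y j i) a b = monom st w y b a"
  by (simp add: monom_def)

lemma RGr_Tr: "RGr st N p y \<longleftrightarrow>
     (\<forall>f\<in>assigns N p. \<forall>g\<in>assigns N p. \<forall>\<gamma>\<in>Tr N p U (length (up p)) g. \<forall>\<gamma>'\<in>Tr N p L (length (lo p)) f.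
        (\<Sum>t\<in>Tr N p U (length (up p)) f. monom st (up p) y t \<gamma>) = (\<Sum>t'\<in>Tr N p L (length (lo p)) g. monom st (lo p) y \<gamma>' t'))
   \<and> (\<forall>f\<in>assigns N p. \<forall>\<gamma>\<in>{t \<in> labs N (length (up p)). \<not> validr p U t}. (\<Sum>t\<in>Tr N p U (length (up p)) f. monom st (up p) y t \<gamma>) = 0)
   \<and> (\<forall>g\<in>assigns N p. \<forall>\<gamma>'\<in>{t \<in> labs N (length (lo p)). \<not> validr p L t}. (\<Sum>t'\<in>Tr N p L (length (lo p)) g. monom st (lo p) y \<gamma>' t') = 0)"
  unfolding RGr_def Tu_Tr Tl_Tr T0u_eq T0l_eq ..

lemma RSp_Tr: "RSp st N N p y \<longleftrightarrow>
     (\<forall>f\<in>assigns N p. \<forall>g\<in>assigns N p.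
        \<forall>\<gamma>\<in>Tr N p U (length (up p)) g. \<forall>\<gamma>'\<in>Tr N p L (length (lo p)) g.
        (\<Sum>t\<in>Tr N p U (length (up p)) f. monom st (up p) y t \<gamma>) = (\<Sum>t'\<in>Tr N p L (length (lo p)) f. monom st (lo p) y t' \<gamma>'))
   \<and> (\<forall>f\<in>assigns N p. \<forall>\<gamma>\<in>{t \<in> labs N (length (up p)). \<not> validr p U t}.
        (\<Sum>t\<in>Tr N p U (length (up p)) f. monom st (up p) y t \<gamma>) = 0)
   \<and> (\<forall>f\<in>assigns N p. \<forall>\<gamma>'\<in>{t \<in> labs N (length (lo p)). \<not> validr p L t}.
        (\<Sum>t'\<in>Tr N p L (length (lo p)) f. monom st (lo p) y t' \<gamma>') = 0)"
proof -
  have a: "Tr N p U (length (up p)) g \<inter> labs N (length (up p)) = Tr N p U (length (up p)) g" for g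
    by (auto simp: Tr_def)
  have b: "Tr N p L (length (lo p)) g \<inter> labs N (length (lo p)) = Tr N p L (length (lo p)) g" for g
    by (auto simp: Tr_def)
  have c: "{t \<in> labs N n. P t} \<inter> labs N n = {t \<in> labs N n. P t}" for n P by auto
  show ?thesis unfolding RSp_def Tu_Tr Tl_Tr T0u_eq T0l_eq a b c ..
qed

lemma lemD: assumes R: "RGr st N q y" shows "RGr st N (pinv q) (\<lambda>i j. y j i)"
proof -
  note R' = R[unfolded RGr_Tr]
  show ?thesis unfolding RGr_Tr up_pinv lo_pinv monom_T[where y=y] validr_pinvU validr_pinvL
  proof (intro conjI ballI)
    fix f' g' \<gamma> \<gamma>'
    assume f': "f' \<in> assigns N (pinv q)" and g': "g' \<in> assigns N (pinv q)"
      and ga: "\<gamma> \<in> Tr N (pinv q) U (length (lo q)) g'" and gb: "\<gamma>' \<in> Tr N (pinv q) L (length (up q)) f'"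
    obtain f where f: "f \<in> assigns N q" "\<And>n. Tr N (pinv q) U n f' = Tr N q L n f" "\<And>n. Tr N (pinv q) L n f' = Tr N q U n f"
      using pinv_corr2[OF f'] by blast
    obtain g where g: "g \<in> assigns N q" "\<And>n. Tr N (pinv q) U n g' = Tr N q L n g" "\<And>n. Tr N (pinv q) L n g' = Tr N q U n g"
      using pinv_corr2[OF g'] by blast
    show "(\<Sum>t\<in>Tr N (pinv q) U (length (lo q)) f'. monom st (lo q) y \<gamma> t) =
          (\<Sum>t'\<in>Tr N (pinv q) L (length (up q)) g'. monom st (up q) y t' \<gamma>')"
    proof -
      have ga': "\<gamma> \<in> Tr N q L (length (lo q)) g" using ga g(2) by simp
      have gb': "\<gamma>' \<in> Tr N q U (length (up q)) f" using gb f(3) by simp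
      have "(\<Sum>t\<in>Tr N q U (length (up q)) g. monom st (up q) y t \<gamma>') = (\<Sum>t'\<in>Tr N q L (length (lo q)) f. monom st (lo q) y \<gamma> t')"
        using R'[THEN conjunct1, rule_format, OF g(1) f(1) gb' ga'] .
      thus ?thesis by (simp add: f(2) g(3))
    qed
  next
    fix f' \<gamma> assume f': "f' \<in> assigns N (pinv q)" and ga: "\<gamma> \<in> {t \<in> labs N (length (lo q)). \<not> validr q L t}"
    obtain f where f: "f \<in> assigns N q" "\<And>n. Tr N (pinv q) U n f' = Tr N q L n f"
      using pinv_corr2[OF f'] by blast
    show "(\<Sum>t\<in>Tr N (pinv q) U (length (lo q)) f'. monom st (lo q) y \<gamma> t) = 0"
      using R'[THEN conjunct2, THEN conjunct2, rule_format, OF f(1) ga] f(2) by simp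
  next
    fix f' \<gamma> assume f': "f' \<in> assigns N (pinv q)" and ga: "\<gamma> \<in> {t \<in> labs N (length (up q)). \<not> validr q U t}"
    obtain f where f: "f \<in> assigns N q" "\<And>n. Tr N (pinv q) L n f' = Tr N q U n f"
      using pinv_corr2[OF f'] by blast
    show "(\<Sum>t'\<in>Tr N (pinv q) L (length (up q)) f'. monom st (up q) y t' \<gamma>) = 0"
      using R'[THEN conjunct2, THEN conjunct1, rule_format, OF f(1) ga] f(2) by simp
  qed
qed

lemma dc: fixes h :: "'i \<Rightarrow> 'j \<Rightarrow> 'a::real_vector"
  assumes "finite S" "finite T" "card S = card T" "S \<noteq> {}"
    "\<forall>a\<in>S. (\<Sum>b\<in>T. h a b) = Y" "\<forall>b\<in>T. (\<Sum>a\<in>S. h a b) = X"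
  shows "X = Y"
proof -
  have 1: "(\<Sum>a\<in>S. \<Sum>b\<in>T. h a b) = (\<Sum>a\<in>S. Y)" using assms(5) by simp
  have 2: "(\<Sum>b\<in>T. \<Sum>a\<in>S. h a b) = (\<Sum>b\<in>T. X)" using assms(6) by simp
  have 3: "(\<Sum>a\<in>S. \<Sum>b\<in>T. h a b) = (\<Sum>b\<in>T. \<Sum>a\<in>S. h a b)" by (rule sum.swap)
  have "real (card S) *\<^sub>R Y = real (card T) *\<^sub>R X" using 1 2 3 by (simp add: sum_constant_scaleR)
  moreover have "card S \<noteq> 0" using assms(1,4) by simp
  ultimately show ?thesis using assms(3) by simp
qed

lemma monom_nil: "monom st [] y a b = 1" by (simp add: monom_def)

definition Qrel :: "('a::ring_1 \<Rightarrow> 'a) \<Rightarrow> nat \<Rightarrow> tcpart \<Rightarrow> (nat \<Rightarrow> nat \<Rightarrow> 'a) \<Rightarrow> bool" where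
  "Qrel st N p y \<longleftrightarrow>
    (\<forall>f\<in>assigns N p. \<forall>g\<in>assigns N p. \<forall>\<gamma>''\<in>Tr N p L (length (lo p)) f. \<forall>\<gamma>'\<in>Tr N p L (length (lo p)) g.
      (\<Sum>t\<in>Tr N p L (length (lo p)) f. monom st (lo p) y t \<gamma>') = (\<Sum>t'\<in>Tr N p L (length (lo p)) g. monom st (lo p) y \<gamma>'' t'))
  \<and> (\<forall>f\<in>assigns N p. \<forall>\<gamma>'\<in>{t \<in> labs N (length (lo p)). \<not> validr p L t}.
      (\<Sum>t\<in>Tr N p L (length (lo p)) f. monom st (lo p) y t \<gamma>') = 0)"

lemma lemC: fixes y :: "nat \<Rightarrow> nat \<Rightarrow> 'a::real_algebra_1"
  assumes d: "disjp p" and R: "RGr st N p y" and Rs: "RGr st N (pinv p) y"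
  shows "Qrel st N p y"
proof -
  note R' = R[unfolded RGr_Tr] and Rs' = Rs[unfolded RGr_Tr up_pinv lo_pinv validr_pinvU validr_pinvL]
  show ?thesis unfolding Qrel_def
  proof (intro conjI ballI)
    fix f g \<gamma>'' \<gamma>'
    assume f: "f \<in> assigns N p" and g: "g \<in> assigns N p"
      and g2: "\<gamma>'' \<in> Tr N p L (length (lo p)) f" and g1: "\<gamma>' \<in> Tr N p L (length (lo p)) g"
    let ?X = "\<Sum>t\<in>Tr N p L (length (lo p)) f. monom st (lo p) y t \<gamma>'"
    let ?Y = "\<Sum>t'\<in>Tr N p L (length (lo p)) g. monom st (lo p) y \<gamma>'' t'"
    show "?X = ?Y"
    proof (cases "N = 0")
      case True
      hence fg: "f = g" using assigns0 f g by blast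
      have "lo p = []" using g2 True labs0 Tr_labs by fastforce
      thus ?thesis using fg by (simp add: monom_nil)
    next
      case False
      obtain f' where f': "f' \<in> assigns N (pinv p)" "\<And>n. Tr N (pinv p) U n f' = Tr N p L n f" "\<And>n. Tr N (pinv p) L n f' = Tr N p U n f"
        using pinv_corr[OF f] by blast
      obtain g' where g': "g' \<in> assigns N (pinv p)" "\<And>n. Tr N (pinv p) U n g' = Tr N p L n g" "\<And>n. Tr N (pinv p) L n g' = Tr N p U n g"
        using pinv_corr[OF g] by blast
      have ne: "Tr N p U (length (up p)) f \<noteq> {}" using Tr_ne[OF d f] False by fastforce
      have A: "\<forall>a\<in>Tr N p U (length (up p)) f. (\<Sum>b\<in>Tr N p U (length (up p)) g. monom st (up p) y a b) = ?X"
      proof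
        fix a assume a: "a \<in> Tr N p U (length (up p)) f"
        show "(\<Sum>b\<in>Tr N p U (length (up p)) g. monom st (up p) y a b) = ?X"
          using Rs'[THEN conjunct1, rule_format, OF f'(1) g'(1), of \<gamma>' a] f' g' g1 a by simp
      qed
      have B: "\<forall>b\<in>Tr N p U (length (up p)) g. (\<Sum>a\<in>Tr N p U (length (up p)) f. monom st (up p) y a b) = ?Y"
        using R'[THEN conjunct1, rule_format, OF f g _ g2] by blast
      show ?thesis
        using dc[OF finite_Tr finite_Tr card_Tr[OF d f g] ne A B] by simp
    qed
  next
    fix f \<gamma>' assume f: "f \<in> assigns N p" and ga: "\<gamma>' \<in> {t \<in> labs N (length (lo p)). \<not> validr p L t}"
    obtain f' where f': "f' \<in> assigns N (pinv p)" "\<And>n. Tr N (pinv p) U n f' = Tr N p L n f"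
      using pinv_corr[OF f] by blast
    show "(\<Sum>t\<in>Tr N p L (length (lo p)) f. monom st (lo p) y t \<gamma>') = 0"
      using Rs'[THEN conjunct2, THEN conjunct1, rule_format, OF f'(1) ga] f' by simp
  qed
qed

lemma lemB: fixes y :: "nat \<Rightarrow> nat \<Rightarrow> 'a::real_algebra_1"
  assumes d: "disjp p" and R: "RGr st N p y" and Q: "Qrel st N p y"
  shows "RSp st N N p y"
proof -
  note R' = R[unfolded RGr_Tr] and Q' = Q[unfolded Qrel_def]
  show ?thesis unfolding RSp_Tr
  proof (intro conjI ballI)
    fix f g \<gamma> \<gamma>' assume f: "f \<in> assigns N p" and g: "g \<in> assigns N p"
      and ga: "\<gamma> \<in> Tr N p U (length (up p)) g" and gb: "\<gamma>' \<in> Tr N p L (length (lo p)) g"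
    obtain \<gamma>'' where g2: "\<gamma>'' \<in> Tr N p L (length (lo p)) f"
    proof (cases "N = 0")
      case True thus ?thesis using that assigns0 f g gb by blast
    next
      case False thus ?thesis using that Tr_ne[OF d f] by fastforce
    qed
    show "(\<Sum>t\<in>Tr N p U (length (up p)) f. monom st (up p) y t \<gamma>) = (\<Sum>t'\<in>Tr N p L (length (lo p)) f. monom st (lo p) y t' \<gamma>')"
      using R'[THEN conjunct1, rule_format, OF f g ga g2] Q'[THEN conjunct1, rule_format, OF f g g2 gb] by simp
  next
    fix f \<gamma> assume a: "f \<in> assigns N p" "\<gamma> \<in> {t \<in> labs N (length (up p)). \<not> validr p U t}"
    show "(\<Sum>t\<in>Tr N p U (length (up p)) f. monom st (up p) y t \<gamma>) = 0" using R'[THEN conjunct2, THEN conjunct1, rule_format, OF a] .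
  next
    fix f \<gamma> assume a: "f \<in> assigns N p" "\<gamma> \<in> {t \<in> labs N (length (lo p)). \<not> validr p L t}"
    show "(\<Sum>t\<in>Tr N p L (length (lo p)) f. monom st (lo p) y t \<gamma>) = 0" using Q'[THEN conjunct2, rule_format, OF a] .
  qed
qed

lemma part2: fixes y :: "nat \<Rightarrow> nat \<Rightarrow> 'a::real_algebra_1"
  assumes d: "disjp p" and S1: "RSp st N N p y" and S2: "RSp st N N p (\<lambda>i j. y j i)"
  shows "RGr st N p y"
proof -
  note S1' = S1[unfolded RSp_Tr] and S2' = S2[unfolded RSp_Tr monom_T[where y=y]]
  show ?thesis unfolding RGr_Tr
  proof (intro conjI ballI)
    fix f g \<gamma>0 \<gamma>' assume f: "f \<in> assigns N p" and g: "g \<in> assigns N p"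
      and ga: "\<gamma>0 \<in> Tr N p U (length (up p)) g" and gb: "\<gamma>' \<in> Tr N p L (length (lo p)) f"
    obtain \<gamma>'' where g2: "\<gamma>'' \<in> Tr N p L (length (lo p)) g"
    proof (cases "N = 0")
      case True thus ?thesis using that assigns0 f g gb by blast
    next
      case False thus ?thesis using that Tr_ne[OF d g] by fastforce
    qed
    let ?X = "\<Sum>t\<in>Tr N p U (length (up p)) f. monom st (up p) y t \<gamma>0"
    let ?Y = "\<Sum>t'\<in>Tr N p L (length (lo p)) g. monom st (lo p) y \<gamma>' t'"
    have A: "\<forall>a\<in>Tr N p U (length (up p)) f. (\<Sum>b\<in>Tr N p U (length (up p)) g. monom st (up p) y a b) = ?Y"
      using S2'[THEN conjunct1, rule_format, OF g f _ gb] by blast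
    have B: "\<forall>b\<in>Tr N p U (length (up p)) g. (\<Sum>a\<in>Tr N p U (length (up p)) f. monom st (up p) y a b) = ?X"
      using S1'[THEN conjunct1, rule_format, OF f g _ g2] S1'[THEN conjunct1, rule_format, OF f g ga g2] by simp
    have ne: "Tr N p U (length (up p)) f \<noteq> {}"
      using card_Tr[OF d f g, of U "length (up p)"] ga finite_Tr[of N p U "length (up p)" g]
      by (metis card.empty card_0_eq empty_iff)
    show "?X = ?Y" using dc[OF finite_Tr finite_Tr card_Tr[OF d f g] ne A B] by simp
  next
    fix f \<gamma> assume a: "f \<in> assigns N p" "\<gamma> \<in> {t \<in> labs N (length (up p)). \<not> validr p U t}"
    show "(\<Sum>t\<in>Tr N p U (length (up p)) f. monom st (up p) y t \<gamma>) = 0" using S1'[THEN conjunct2, THEN conjunct1, rule_format, OF a] .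
  next
    fix f \<gamma> assume a: "f \<in> assigns N p" "\<gamma> \<in> {t \<in> labs N (length (lo p)). \<not> validr p L t}"
    show "(\<Sum>t\<in>Tr N p L (length (lo p)) f. monom st (lo p) y \<gamma> t) = 0" using S2'[THEN conjunct2, THEN conjunct2, rule_format, OF a] .
  qed
qed



definition RR :: "tcpart \<Rightarrow> (pt3 \<times> pt3) set" where "RR p = cedges p (pinv p)"
definition bsk :: "tcpart \<Rightarrow> pt3 \<Rightarrow> pt set" where
  "bsk p x = {U i | i. (x, Tp i) \<in> (RR p)\<^sup>*} \<union> {L m | m. (x, Bt m) \<in> (RR p)\<^sup>*}"
definition XX :: "tcpart \<Rightarrow> pt3 set" where "XX p = Tp ` {..<length (lo p)} \<union> Bt ` {..<length (lo p)}"

lemma up_pp[simp]: "up (pcomp p (pinv p)) = lo p" by (simp add: pcomp_def)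
lemma lo_pp[simp]: "lo (pcomp p (pinv p)) = lo p" by (simp add: pcomp_def)
lemma blks_pp: "blks (pcomp p (pinv p)) = {bsk p x | x. x \<in> XX p}"
  by (simp add: pcomp_def bsk_def RR_def XX_def)

lemma U_bs: "U i \<in> bsk p x \<longleftrightarrow> (x, Tp i) \<in> (RR p)\<^sup>*" by (auto simp: bsk_def)
lemma L_bs: "L i \<in> bsk p x \<longleftrightarrow> (x, Bt i) \<in> (RR p)\<^sup>*" by (auto simp: bsk_def)

fun sh :: "pt3 \<Rightarrow> pt" where "sh (Tp i) = L i" | "sh (Md j) = U j" | "sh (Bt m) = L m"
fun isTp :: "pt3 \<Rightarrow> bool" where "isTp (Tp i) = True" | "isTp _ = False"
fun isBt :: "pt3 \<Rightarrow> bool" where "isBt (Bt i) = True" | "isBt _ = False"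

lemma sh_top: "sh (emb_top x) = flip_pt x" by (cases x) auto
lemma sh_bot: "sh (emb_bot x) = x" by (cases x) auto
lemma top_notBt: "\<not> isBt (emb_top x)" by (cases x) auto
lemma bot_notTp: "\<not> isTp (emb_bot x)" by (cases x) auto

lemma RR_edge: "(a, b) \<in> RR p \<Longrightarrow> sameblk p (sh a) (sh b) \<and> \<not> (isTp a \<and> isBt b) \<and> \<not> (isBt a \<and> isTp b)"
  unfolding RR_def cedges_def
  by (auto simp: sh_top sh_bot sameblk_pinv top_notBt bot_notTp)

lemma RR_sym: "(a, b) \<in> RR p \<Longrightarrow> (b, a) \<in> RR p"
  unfolding RR_def cedges_def using sb_sym by blast

lemma RRs_sym: "(a, b) \<in> (RR p)\<^sup>* \<Longrightarrow> (b, a) \<in> (RR p)\<^sup>*"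
proof -
  have "sym (RR p)" using RR_sym by (auto intro: symI)
  hence "sym ((RR p)\<^sup>*)" by (rule sym_rtrancl)
  thus "(a, b) \<in> (RR p)\<^sup>* \<Longrightarrow> (b, a) \<in> (RR p)\<^sup>*" by (rule symD)
qed

definition Inv :: "tcpart \<Rightarrow> pt3 \<Rightarrow> pt3 \<Rightarrow> bool" where
  "Inv p x y \<longleftrightarrow> x = y \<or> (sameblk p (sh x) (sh y) \<and>
     ((isTp x \<and> isBt y) \<or> (isBt x \<and> isTp y) \<longrightarrow> (\<exists>m. sameblk p (sh x) (U m))))"

lemma RR_inv: assumes d: "disjp p" and xy: "(x, y) \<in> (RR p)\<^sup>*" shows "Inv p x y"
  using xy
proof (induction rule: rtrancl_induct)
  case base thus ?case by (simp add: Inv_def)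
next
  case (step y z)
  note e = RR_edge[OF step(2)]
  show ?case
  proof (cases "x = y")
    case True thus ?thesis using e by (auto simp: Inv_def)
  next
    case False
    hence I: "sameblk p (sh x) (sh y)" "(isTp x \<and> isBt y) \<or> (isBt x \<and> isTp y) \<longrightarrow> (\<exists>m. sameblk p (sh x) (U m))"
      using step(3) by (auto simp: Inv_def)
    have T: "sameblk p (sh x) (sh z)" using sb_trans[OF d I(1)] e by blast
    have C: "\<exists>m. sameblk p (sh x) (U m)" if c: "(isTp x \<and> isBt z) \<or> (isBt x \<and> isTp z)"
    proof (cases y)
      case (Tp i) thus ?thesis using c e I by auto
    next
      case (Md j) thus ?thesis using I by auto
    next
      case (Bt m) thus ?thesis using c e I by auto
    qed
    show ?thesis using T C by (auto simp: Inv_def)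
  qed
qed

lemma E1: "sameblk p (L a) (L b) \<Longrightarrow> (Tp a, Tp b) \<in> RR p"
  unfolding RR_def cedges_def
  by (rule UnI1, rule CollectI, rule exI[where x="U a"], rule exI[where x="U b"]) (simp add: sameblk_pinv)
lemma E2: "sameblk p (L a) (L b) \<Longrightarrow> (Bt a, Bt b) \<in> RR p"
  unfolding RR_def cedges_def
  by (rule UnI2, rule CollectI, rule exI[where x="L a"], rule exI[where x="L b"]) simp
lemma E3: "sameblk p (L a) (U m) \<Longrightarrow> (Tp a, Md m) \<in> RR p"
  unfolding RR_def cedges_def
  by (rule UnI1, rule CollectI, rule exI[where x="U a"], rule exI[where x="L m"]) (simp add: sameblk_pinv)
lemma E4: "sameblk p (U m) (L a) \<Longrightarrow> (Md m, Bt a) \<in> RR p"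
  unfolding RR_def cedges_def
  by (rule UnI2, rule CollectI, rule exI[where x="U m"], rule exI[where x="L a"]) simp

lemma Tp_reach: assumes "disjp p" "(x, Tp a) \<in> (RR p)\<^sup>*" shows "x = Tp a \<or> sameblk p (sh x) (L a)"
  using RR_inv[OF assms] by (auto simp: Inv_def)
lemma Bt_reach: assumes "disjp p" "(x, Bt a) \<in> (RR p)\<^sup>*" shows "x = Bt a \<or> sameblk p (sh x) (L a)"
  using RR_inv[OF assms] by (auto simp: Inv_def)

lemma sb_pp_U: assumes tc: "is_tcpart p" and a: "a < length (lo p)" and b: "b < length (lo p)"
  shows "sameblk (pcomp p (pinv p)) (U a) (U b) \<longleftrightarrow> sameblk p (L a) (L b)"
proof
  have d: "disjp p" using tc tc_disj by blast
  assume "sameblk (pcomp p (pinv p)) (U a) (U b)"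
  then obtain x where x: "(x, Tp a) \<in> (RR p)\<^sup>*" "(x, Tp b) \<in> (RR p)\<^sup>*"
    unfolding sameblk_def blks_pp by (auto simp: U_bs)
  have ra: "sameblk p (L a) (L a)" using sb_refl[OF tc] a by (simp add: pts_L)
  show "sameblk p (L a) (L b)"
  proof -
    from Tp_reach[OF d x(1)] Tp_reach[OF d x(2)] show ?thesis
    proof (elim disjE)
      assume "x = Tp a" "x = Tp b" thus ?thesis using ra by simp
    next
      assume "x = Tp a" "sameblk p (sh x) (L b)" thus ?thesis by simp
    next
      assume "sameblk p (sh x) (L a)" "x = Tp b" thus ?thesis using sb_sym by simp
    next
      assume "sameblk p (sh x) (L a)" "sameblk p (sh x) (L b)"
      thus ?thesis using sb_sym sb_trans[OF d] by blast
    qed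
  qed
next
  assume s: "sameblk p (L a) (L b)"
  have "Tp a \<in> XX p" using a by (simp add: XX_def)
  moreover have "U a \<in> bsk p (Tp a)" by (simp add: U_bs)
  moreover have "U b \<in> bsk p (Tp a)" using E1[OF s] by (simp add: U_bs)
  ultimately show "sameblk (pcomp p (pinv p)) (U a) (U b)"
    unfolding sameblk_def blks_pp by blast
qed

lemma sb_pp_L: assumes tc: "is_tcpart p" and a: "a < length (lo p)" and b: "b < length (lo p)"
  shows "sameblk (pcomp p (pinv p)) (L a) (L b) \<longleftrightarrow> sameblk p (L a) (L b)"
proof
  have d: "disjp p" using tc tc_disj by blast
  assume "sameblk (pcomp p (pinv p)) (L a) (L b)"
  then obtain x where x: "(x, Bt a) \<in> (RR p)\<^sup>*" "(x, Bt b) \<in> (RR p)\<^sup>*"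
    unfolding sameblk_def blks_pp by (auto simp: L_bs)
  have ra: "sameblk p (L a) (L a)" using sb_refl[OF tc] a by (simp add: pts_L)
  show "sameblk p (L a) (L b)"
  proof -
    from Bt_reach[OF d x(1)] Bt_reach[OF d x(2)] show ?thesis
    proof (elim disjE)
      assume "x = Bt a" "x = Bt b" thus ?thesis using ra by simp
    next
      assume "x = Bt a" "sameblk p (sh x) (L b)" thus ?thesis by simp
    next
      assume "sameblk p (sh x) (L a)" "x = Bt b" thus ?thesis using sb_sym by simp
    next
      assume "sameblk p (sh x) (L a)" "sameblk p (sh x) (L b)"
      thus ?thesis using sb_sym sb_trans[OF d] by blast
    qed
  qed
next
  assume s: "sameblk p (L a) (L b)"
  have "Bt a \<in> XX p" using a by (simp add: XX_def)
  moreover have "L a \<in> bsk p (Bt a)" by (simp add: L_bs)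
  moreover have "L b \<in> bsk p (Bt a)" using E2[OF s] by (simp add: L_bs)
  ultimately show "sameblk (pcomp p (pinv p)) (L a) (L b)"
    unfolding sameblk_def blks_pp by blast
qed

lemma validr_pp_U: "is_tcpart p \<Longrightarrow> length t = length (lo p) \<Longrightarrow> validr (pcomp p (pinv p)) U t \<longleftrightarrow> validr p L t"
  unfolding validr_def using sb_pp_U by simp
lemma validr_pp_L: "is_tcpart p \<Longrightarrow> length t = length (lo p) \<Longrightarrow> validr (pcomp p (pinv p)) L t \<longleftrightarrow> validr p L t"
  unfolding validr_def using sb_pp_L by simp

lemma blk_unique: "disjp p \<Longrightarrow> B1 \<in> blks p \<Longrightarrow> B2 \<in> blks p \<Longrightarrow> x \<in> B1 \<Longrightarrow> sameblk p x y \<Longrightarrow> y \<in> B2 \<Longrightarrow> B1 = B2"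
  unfolding disjp_def sameblk_def by metis

lemma K1: assumes tc: "is_tcpart p" and B': "B' \<in> tblocks (pcomp p (pinv p))"
  shows "\<exists>B\<in>tblocks p. (\<forall>i. U i \<in> B' \<longrightarrow> L i \<in> B) \<and> (\<forall>i. L i \<in> B' \<longrightarrow> L i \<in> B) \<and>
           (\<forall>B1. (B1 \<in> tblocks p \<and> (\<exists>i. U i \<in> B' \<and> L i \<in> B1)) \<longleftrightarrow> B1 = B)"
proof -
  have d: "disjp p" using tc tc_disj by blast
  obtain x where x: "x \<in> XX p" "B' = bsk p x" using B' unfolding tblocks_def blks_pp by blast
  obtain i0 j0 where ij: "U i0 \<in> B'" "L j0 \<in> B'" using B' unfolding tblocks_def by blast
  have r1: "(x, Tp i0) \<in> (RR p)\<^sup>*" using ij x by (simp add: U_bs)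
  have r2: "(x, Bt j0) \<in> (RR p)\<^sup>*" using ij x by (simp add: L_bs)
  have "(Tp i0, Bt j0) \<in> (RR p)\<^sup>*" using RRs_sym[OF r1] r2 by (rule rtrancl_trans)
  from RR_inv[OF d this] obtain m where m: "sameblk p (L i0) (U m)" by (auto simp: Inv_def)
  then obtain B where B: "B \<in> blks p" "L i0 \<in> B" "U m \<in> B" unfolding sameblk_def by blast
  have Bt: "B \<in> tblocks p" using B unfolding tblocks_def by blast
  have rU: "L i \<in> B" if "U i \<in> B'" for i
  proof -
    have "(x, Tp i) \<in> (RR p)\<^sup>*" using that x by (simp add: U_bs)
    hence "(Tp i0, Tp i) \<in> (RR p)\<^sup>*" using RRs_sym[OF r1] by (rule rtrancl_trans[rotated])
    from Tp_reach[OF d this] have "i0 = i \<or> sameblk p (L i0) (L i)" by auto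
    thus ?thesis
    proof
      assume "sameblk p (L i0) (L i)"
      then obtain B2 where "B2 \<in> blks p" "L i0 \<in> B2" "L i \<in> B2" unfolding sameblk_def by blast
      thus ?thesis using B d unfolding disjp_def by blast
    qed (use B in simp)
  qed
  have rL: "L i \<in> B" if "L i \<in> B'" for i
  proof -
    have "(x, Bt i) \<in> (RR p)\<^sup>*" using that x by (simp add: L_bs)
    hence "(Tp i0, Bt i) \<in> (RR p)\<^sup>*" using RRs_sym[OF r1] by (rule rtrancl_trans[rotated])
    from Bt_reach[OF d this] have "sameblk p (L i0) (L i)" by auto
    then obtain B2 where "B2 \<in> blks p" "L i0 \<in> B2" "L i \<in> B2" unfolding sameblk_def by blast
    thus ?thesis using B d unfolding disjp_def by blast
  qed
  have uq: "(B1 \<in> tblocks p \<and> (\<exists>i. U i \<in> B' \<and> L i \<in> B1)) \<longleftrightarrow> B1 = B" for B1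
  proof
    assume "B1 \<in> tblocks p \<and> (\<exists>i. U i \<in> B' \<and> L i \<in> B1)"
    then obtain i where "B1 \<in> blks p" "U i \<in> B'" "L i \<in> B1" unfolding tblocks_def by blast
    thus "B1 = B" using rU B d unfolding disjp_def by blast
  next
    assume "B1 = B" thus "B1 \<in> tblocks p \<and> (\<exists>i. U i \<in> B' \<and> L i \<in> B1)" using Bt ij rU by blast
  qed
  show ?thesis using Bt rU rL uq by blast
qed

lemma K2: assumes tc: "is_tcpart p" and B: "B \<in> tblocks p" and Li: "L i \<in> B"
  shows "\<exists>B'\<in>tblocks (pcomp p (pinv p)). U i \<in> B' \<and> L i \<in> B'"
proof -
  have d: "disjp p" using tc tc_disj by blast
  obtain m where m: "U m \<in> B" using B unfolding tblocks_def by blast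
  have Bb: "B \<in> blks p" using B by (simp add: tblocks_def)
  have il: "i < length (lo p)" using tc_sub[OF tc Bb] Li by (auto simp: pts_L)
  have s: "sameblk p (L i) (U m)" using Bb Li m unfolding sameblk_def by blast
  have "(Tp i, Bt i) \<in> (RR p)\<^sup>*"
    using E3[OF s] E4[OF sb_sym[OF s]] by (meson converse_rtrancl_into_rtrancl r_into_rtrancl)
  hence LB: "L i \<in> bsk p (Tp i)" by (simp add: L_bs)
  have UB: "U i \<in> bsk p (Tp i)" by (simp add: U_bs)
  have "bsk p (Tp i) \<in> blks (pcomp p (pinv p))" unfolding blks_pp XX_def using il by blast
  hence "bsk p (Tp i) \<in> tblocks (pcomp p (pinv p))" using LB UB unfolding tblocks_def by blast
  thus ?thesis using LB UB by blast
qed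

lemma pp_corr: assumes tc: "is_tcpart p" and f: "f \<in> assigns N p"
  shows "\<exists>f'\<in>assigns N (pcomp p (pinv p)).
     Tr N (pcomp p (pinv p)) U (length (lo p)) f' = Tr N p L (length (lo p)) f \<and>
     Tr N (pcomp p (pinv p)) L (length (lo p)) f' = Tr N p L (length (lo p)) f"
proof -
  let ?q = "pcomp p (pinv p)"
  have d: "disjp p" using tc tc_disj by blast
  define f' where "f' = (\<lambda>B'. if B' \<in> tblocks ?q then f (SOME B. B \<in> tblocks p \<and> (\<exists>i. U i \<in> B' \<and> L i \<in> B)) else undefined)"
  have fv: "\<exists>B\<in>tblocks p. (\<forall>i. U i \<in> B' \<longrightarrow> L i \<in> B) \<and> (\<forall>i. L i \<in> B' \<longrightarrow> L i \<in> B) \<and> f' B' = f B"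
    if B': "B' \<in> tblocks ?q" for B'
  proof -
    obtain B where B: "B\<in>tblocks p" "\<forall>i. U i \<in> B' \<longrightarrow> L i \<in> B" "\<forall>i. L i \<in> B' \<longrightarrow> L i \<in> B"
      "\<forall>B1. (B1 \<in> tblocks p \<and> (\<exists>i. U i \<in> B' \<and> L i \<in> B1)) \<longleftrightarrow> B1 = B"
      using K1[OF tc B'] by blast
    have "(SOME B. B \<in> tblocks p \<and> (\<exists>i. U i \<in> B' \<and> L i \<in> B)) = B" using B(4) by simp
    thus ?thesis using B B' by (auto simp: f'_def)
  qed
  have fa: "f' \<in> assigns N ?q"
    unfolding assigns_def
  proof (rule PiE_I)
    fix B' assume "B' \<in> tblocks ?q"
    then obtain B where "B \<in> tblocks p" "f' B' = f B" using fv by blast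
    thus "f' B' \<in> {1..N}" using f unfolding assigns_def by auto
  qed (simp add: f'_def)
  have cond: "(\<forall>B'\<in>tblocks ?q. \<forall>i<length t. C i \<in> B' \<longrightarrow> t ! i = f' B') \<longleftrightarrow>
              (\<forall>B\<in>tblocks p. \<forall>i<length t. L i \<in> B \<longrightarrow> t ! i = f B)"
    if C: "C = U \<or> C = L" for t C
  proof
    assume H: "\<forall>B'\<in>tblocks ?q. \<forall>i<length t. C i \<in> B' \<longrightarrow> t ! i = f' B'"
    show "\<forall>B\<in>tblocks p. \<forall>i<length t. L i \<in> B \<longrightarrow> t ! i = f B"
    proof (intro ballI allI impI)
      fix B i assume B: "B \<in> tblocks p" "i < length t" "L i \<in> B"
      obtain B' where B': "B' \<in> tblocks ?q" "U i \<in> B'" "L i \<in> B'" using K2[OF tc B(1,3)] by blast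
      obtain B0 where B0: "B0\<in>tblocks p" "\<forall>i. U i \<in> B' \<longrightarrow> L i \<in> B0" "f' B' = f B0" using fv[OF B'(1)] by blast
      have "B0 = B" using B0 B' B d tblocks_blks unfolding disjp_def by blast
      moreover have "C i \<in> B'" using C B' by auto
      ultimately show "t ! i = f B" using H B' B0 B by auto
    qed
  next
    assume H: "\<forall>B\<in>tblocks p. \<forall>i<length t. L i \<in> B \<longrightarrow> t ! i = f B"
    show "\<forall>B'\<in>tblocks ?q. \<forall>i<length t. C i \<in> B' \<longrightarrow> t ! i = f' B'"
    proof (intro ballI allI impI)
      fix B' i assume B': "B' \<in> tblocks ?q" "i < length t" "C i \<in> B'"
      obtain B0 where B0: "B0\<in>tblocks p" "\<forall>i. U i \<in> B' \<longrightarrow> L i \<in> B0" "\<forall>i. L i \<in> B' \<longrightarrow> L i \<in> B0" "f' B' = f B0"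
        using fv[OF B'(1)] by blast
      have "L i \<in> B0" using C B' B0 by auto
      thus "t ! i = f' B'" using H B0 B' by auto
    qed
  qed
  have "Tr N ?q U (length (lo p)) f' = Tr N p L (length (lo p)) f"
    unfolding Tr_def using cond[of U] validr_pp_U[OF tc] by (auto simp: labs_def)
  moreover have "Tr N ?q L (length (lo p)) f' = Tr N p L (length (lo p)) f"
    unfolding Tr_def using cond[of L] validr_pp_L[OF tc] by (auto simp: labs_def)
  ultimately show ?thesis using fa by blast
qed

lemma lemA: assumes tc: "is_tcpart p" and R: "RGr st N (pcomp p (pinv p)) y"
  shows "Qrel st N p y"
proof -
  let ?q = "pcomp p (pinv p)"
  note R' = R[unfolded RGr_Tr up_pp lo_pp]
  show ?thesis unfolding Qrel_def
  proof (intro conjI ballI)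
    fix f g \<gamma>'' \<gamma>'
    assume f: "f \<in> assigns N p" and g: "g \<in> assigns N p"
      and g2: "\<gamma>'' \<in> Tr N p L (length (lo p)) f" and g1: "\<gamma>' \<in> Tr N p L (length (lo p)) g"
    obtain f' where f': "f' \<in> assigns N ?q" "Tr N ?q U (length (lo p)) f' = Tr N p L (length (lo p)) f"
      "Tr N ?q L (length (lo p)) f' = Tr N p L (length (lo p)) f" using pp_corr[OF tc f] by blast
    obtain g' where g': "g' \<in> assigns N ?q" "Tr N ?q U (length (lo p)) g' = Tr N p L (length (lo p)) g"
      "Tr N ?q L (length (lo p)) g' = Tr N p L (length (lo p)) g" using pp_corr[OF tc g] by blast
    show "(\<Sum>t\<in>Tr N p L (length (lo p)) f. monom st (lo p) y t \<gamma>') = (\<Sum>t'\<in>Tr N p L (length (lo p)) g. monom st (lo p) y \<gamma>'' t')"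
      using R'[THEN conjunct1, rule_format, OF f'(1) g'(1)] f' g' g1 g2 by simp
  next
    fix f \<gamma>' assume f: "f \<in> assigns N p" and ga: "\<gamma>' \<in> {t \<in> labs N (length (lo p)). \<not> validr p L t}"
    obtain f' where f': "f' \<in> assigns N ?q" "Tr N ?q U (length (lo p)) f' = Tr N p L (length (lo p)) f"
      using pp_corr[OF tc f] by blast
    have "\<gamma>' \<in> {t \<in> labs N (length (lo p)). \<not> validr ?q U t}"
      using ga validr_pp_U[OF tc] by (auto simp: labs_def)
    thus "(\<Sum>t\<in>Tr N p L (length (lo p)) f. monom st (lo p) y t \<gamma>') = 0"
      using R'[THEN conjunct2, THEN conjunct1, rule_format, OF f'(1)] f'(2) by simp
  qed
qed



definition sts :: "('a::ring_1 \<Rightarrow> 'a) \<Rightarrow> bool" where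
  "sts st \<longleftrightarrow> (\<forall>x. st (st x) = x) \<and> (\<forall>x y. st (x + y) = st x + st y) \<and> (\<forall>x y. st (x * y) = st y * st x)"

lemma sts_st: "sts st \<Longrightarrow> st (st x) = x" by (simp add: sts_def)
lemma sts_add: "sts st \<Longrightarrow> st (x + y) = st x + st y" by (simp add: sts_def)
lemma sts_mult: "sts st \<Longrightarrow> st (x * y) = st y * st x" by (simp add: sts_def)
lemma sts_0: "sts st \<Longrightarrow> st 0 = 0"
  using sts_add[of st 0 0] by simp
lemma sts_1: "sts st \<Longrightarrow> st 1 = 1"
  using sts_mult[of st 1 "st 1"] sts_st[of st 1] by simp
lemma sts_sum: "sts st \<Longrightarrow> st (\<Sum>x\<in>A. f x) = (\<Sum>x\<in>A. st (f x))"
proof -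
  assume s: "sts st"
  have "(\<Sum>x\<in>A. st (f x)) = st (sum f A)"
    using sum_comp_morphism[of st f A, unfolded o_def] sts_0[OF s] sts_add[OF s] by blast
  thus ?thesis by simp
qed

lemma monom_Cons: "monom st (c # w) y (a # as) (b # bs) = cpow st c (y a b) * monom st w y as bs"
proof -
  have "[0..<length (c # w)] = 0 # map Suc [0..<length w]"
    by (simp add: upt_conv_Cons map_Suc_upt del: upt_Suc)
  thus ?thesis by (simp add: monom_def o_def)
qed

lemma labs_Suc: "labs N (Suc k) = (\<lambda>(a, as). a # as) ` ({1..N} \<times> labs N k)"
proof (rule set_eqI)
  fix t show "t \<in> labs N (Suc k) \<longleftrightarrow> t \<in> (\<lambda>(a, as). a # as) ` ({1..N} \<times> labs N k)"
    by (cases t) (auto simp: labs_def)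
qed

lemma sum_labs_Suc: "(\<Sum>x\<in>labs N (Suc k). F x) = (\<Sum>a\<in>{1..N}. \<Sum>as\<in>labs N k. F (a # as))"
proof -
  have inj: "inj_on (\<lambda>(a, as). a # as) ({1..N} \<times> labs N k)" by (auto simp: inj_on_def)
  have "(\<Sum>x\<in>labs N (Suc k). F x) = (\<Sum>x\<in>{1..N} \<times> labs N k. F ((\<lambda>(a, as). a # as) x))"
    unfolding labs_Suc by (rule sum.reindex[OF inj, unfolded o_def])
  also have "\<dots> = (\<Sum>a\<in>{1..N}. \<Sum>as\<in>labs N k. F (a # as))"
    by (simp add: sum.cartesian_product split_def)
  finally show ?thesis .
qed

lemma labs_0: "labs N 0 = {[]}" by (auto simp: labs_def)

lemma labs_Cons: "a # as \<in> labs N (Suc k) \<longleftrightarrow> a \<in> {1..N} \<and> as \<in> labs N k"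
  by (auto simp: labs_def)

definition UR :: "('a::ring_1 \<Rightarrow> 'a) \<Rightarrow> nat \<Rightarrow> (nat \<Rightarrow> nat \<Rightarrow> 'a) \<Rightarrow> bool" where
  "UR st N u \<longleftrightarrow> (\<forall>a\<in>{1..N}. \<forall>b\<in>{1..N}.
      (\<Sum>j\<in>{1..N}. u a j * st (u b j)) = (if a = b then 1 else 0) \<and>
      (\<Sum>j\<in>{1..N}. st (u a j) * u b j) = (if a = b then 1 else 0) \<and>
      (\<Sum>j\<in>{1..N}. st (u j a) * u j b) = (if a = b then 1 else 0) \<and>
      (\<Sum>j\<in>{1..N}. u j a * st (u j b)) = (if a = b then 1 else 0))"

lemma cpow_row: assumes s: "sts st" and U: "UR st N u" and a: "a \<in> {1..N}" and b: "b \<in> {1..N}"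
  shows "(\<Sum>j\<in>{1..N}. cpow st c (u a j) * st (cpow st c (u b j))) = (if a = b then 1 else 0)"
  using U a b by (cases c) (simp_all add: UR_def sts_st[OF s])

lemma cpow_col: assumes s: "sts st" and U: "UR st N u" and a: "a \<in> {1..N}" and b: "b \<in> {1..N}"
  shows "(\<Sum>j\<in>{1..N}. st (cpow st c (u j a)) * cpow st c (u j b)) = (if a = b then 1 else 0)"
  using U a b by (cases c) (simp_all add: UR_def sts_st[OF s])

lemma U1: assumes s: "sts st" and U: "UR st N u"
  shows "t \<in> labs N (length w) \<Longrightarrow> r \<in> labs N (length w) \<Longrightarrow>
    (\<Sum>g\<in>labs N (length w). monom st w u t g * st (monom st w u r g)) = (if t = r then 1 else 0)"
proof (induction w arbitrary: t r)
  case Nil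
  thus ?case by (simp add: labs_0 monom_nil sts_1[OF s])
next
  case (Cons c w)
  obtain a as where t: "t = a # as" using Cons.prems(1) by (cases t) (auto simp: labs_def)
  obtain b bs where r: "r = b # bs" using Cons.prems(2) by (cases r) (auto simp: labs_def)
  have a: "a \<in> {1..N}" and as: "as \<in> labs N (length w)" using Cons.prems(1) t labs_Cons by auto
  have b: "b \<in> {1..N}" and bs: "bs \<in> labs N (length w)" using Cons.prems(2) r labs_Cons by auto
  let ?M = "monom st w u"
  have "(\<Sum>g\<in>labs N (length (c # w)). monom st (c # w) u t g * st (monom st (c # w) u r g))
     = (\<Sum>j\<in>{1..N}. \<Sum>gs\<in>labs N (length w). cpow st c (u a j) * (?M as gs * st (?M bs gs)) * st (cpow st c (u b j)))"
    by (simp add: sum_labs_Suc t r monom_Cons sts_mult[OF s] mult.assoc)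
  also have "\<dots> = (\<Sum>j\<in>{1..N}. cpow st c (u a j) * (\<Sum>gs\<in>labs N (length w). ?M as gs * st (?M bs gs)) * st (cpow st c (u b j)))"
    by (simp add: sum_distrib_left sum_distrib_right)
  also have "\<dots> = (\<Sum>j\<in>{1..N}. cpow st c (u a j) * (if as = bs then 1 else 0) * st (cpow st c (u b j)))"
    using Cons.IH[OF as bs] by simp
  also have "\<dots> = (if as = bs then 1 else 0) * (\<Sum>j\<in>{1..N}. cpow st c (u a j) * st (cpow st c (u b j)))"
    by simp
  also have "\<dots> = (if t = r then 1 else 0)" using cpow_row[OF s U a b] t r by simp
  finally show ?case .
qed

lemma U2: assumes s: "sts st" and U: "UR st N u"
  shows "t \<in> labs N (length w) \<Longrightarrow> r \<in> labs N (length w) \<Longrightarrow>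
    (\<Sum>g\<in>labs N (length w). st (monom st w u g t) * monom st w u g r) = (if t = r then 1 else 0)"
proof (induction w arbitrary: t r)
  case Nil
  thus ?case by (simp add: labs_0 monom_nil sts_1[OF s])
next
  case (Cons c w)
  obtain a as where t: "t = a # as" using Cons.prems(1) by (cases t) (auto simp: labs_def)
  obtain b bs where r: "r = b # bs" using Cons.prems(2) by (cases r) (auto simp: labs_def)
  have a: "a \<in> {1..N}" and as: "as \<in> labs N (length w)" using Cons.prems(1) t labs_Cons by auto
  have b: "b \<in> {1..N}" and bs: "bs \<in> labs N (length w)" using Cons.prems(2) r labs_Cons by auto
  let ?M = "monom st w u"
  have "(\<Sum>g\<in>labs N (length (c # w)). st (monom st (c # w) u g t) * monom st (c # w) u g r)
     = (\<Sum>j\<in>{1..N}. \<Sum>gs\<in>labs N (length w). st (?M gs as) * (st (cpow st c (u j a)) * cpow st c (u j b)) * ?M gs bs)"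
    by (simp add: sum_labs_Suc t r monom_Cons sts_mult[OF s] mult.assoc)
  also have "\<dots> = (\<Sum>gs\<in>labs N (length w). st (?M gs as) * (\<Sum>j\<in>{1..N}. st (cpow st c (u j a)) * cpow st c (u j b)) * ?M gs bs)"
    by (subst sum.swap) (simp add: sum_distrib_left sum_distrib_right)
  also have "\<dots> = (\<Sum>gs\<in>labs N (length w). st (?M gs as) * (if a = b then 1 else 0) * ?M gs bs)"
    using cpow_col[OF s U a b] by simp
  also have "\<dots> = (if a = b then 1 else 0) * (\<Sum>gs\<in>labs N (length w). st (?M gs as) * ?M gs bs)"
    by simp
  also have "\<dots> = (if t = r then 1 else 0)" using Cons.IH[OF as bs] t r by simp
  finally show ?case .
qed



lemma labs2: "labs N (Suc (Suc 0)) = {[x, z] | x z. x \<in> {1..N} \<and> z \<in> {1..N}}"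
proof (rule set_eqI)
  fix t show "t \<in> labs N (Suc (Suc 0)) \<longleftrightarrow> t \<in> {[x, z] | x z. x \<in> {1..N} \<and> z \<in> {1..N}}"
  proof
    assume "t \<in> labs N (Suc (Suc 0))"
    then obtain x z where "t = [x, z]" "x \<in> {1..N}" "z \<in> {1..N}" unfolding labs_def
      by (cases t; cases "tl t") auto
    thus "t \<in> {[x, z] | x z. x \<in> {1..N} \<and> z \<in> {1..N}}" by blast
  qed (auto simp: labs_def)
qed

lemma all2: "(\<forall>a<(2::nat). P a) \<longleftrightarrow> P 0 \<and> P 1"
  by (auto simp: less_2_cases_iff)

lemma pair_up: assumes R: "RGr st N (TCP [c1, c2] [] {{U 0, U 1}}) y" and a: "a \<in> {1..N}" and b: "b \<in> {1..N}"
  shows "(\<Sum>j\<in>{1..N}. cpow st c1 (y j a) * cpow st c2 (y j b)) = (if a = b then 1 else 0)"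
proof -
  let ?P = "TCP [c1, c2] [] {{U 0, U 1}}"
  have tb: "tblocks ?P = {}" by (auto simp: tblocks_def)
  define f0 where "f0 = (\<lambda>_::pt set. undefined::nat)"
  have f0: "f0 \<in> assigns N ?P" unfolding assigns_def tb f0_def by simp
  have val: "valid_up ?P [x, z] \<longleftrightarrow> x = z" for x z
    unfolding valid_up_def sameblk_def by (auto simp: less_Suc_eq)
  have Tu: "Tu N ?P f0 = (\<lambda>j. [j, j]) ` {1..N}"
    unfolding Tu_def tb by (auto simp: labs2 val simp del: One_nat_def)
  have Tl: "Tl N ?P f0 = {[]}" by (auto simp: Tl_def labs_def valid_lo_def)
  have inj: "inj_on (\<lambda>j. [j, j]) {1..N}" by (auto simp: inj_on_def)
  have S: "(\<Sum>t\<in>Tu N ?P f0. monom st [c1, c2] y t [a, b]) = (\<Sum>j\<in>{1..N}. cpow st c1 (y j a) * cpow st c2 (y j b))"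
    unfolding Tu sum.reindex[OF inj] o_def by (simp add: monom_Cons monom_nil)
  show ?thesis
  proof (cases "a = b")
    case True
    have g: "[a, a] \<in> Tu N ?P f0" using a Tu by auto
    have "(\<Sum>t\<in>Tu N ?P f0. monom st [c1, c2] y t [a, a]) = (\<Sum>t'\<in>Tl N ?P f0. monom st [] y [] t')"
      using R[unfolded RGr_def, THEN conjunct1, rule_format, OF f0 f0 g] Tl by simp
    thus ?thesis using S True Tl by (simp add: monom_nil)
  next
    case False
    have g: "[a, b] \<in> T0u N ?P" using a b False val[of a b] by (auto simp: T0u_def labs_def simp del: One_nat_def)
    show ?thesis using R[unfolded RGr_def, THEN conjunct2, THEN conjunct1, rule_format, OF f0 g] S False by simp
  qed
qed

lemma pair_lo: assumes R: "RGr st N (TCP [] [c1, c2] {{L 0, L 1}}) y" and a: "a \<in> {1..N}" and b: "b \<in> {1..N}"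
  shows "(\<Sum>j\<in>{1..N}. cpow st c1 (y a j) * cpow st c2 (y b j)) = (if a = b then 1 else 0)"
proof -
  let ?P = "TCP [] [c1, c2] {{L 0, L 1}}"
  have tb: "tblocks ?P = {}" by (auto simp: tblocks_def)
  define f0 where "f0 = (\<lambda>_::pt set. undefined::nat)"
  have f0: "f0 \<in> assigns N ?P" unfolding assigns_def tb f0_def by simp
  have val: "valid_lo ?P [x, z] \<longleftrightarrow> x = z" for x z
    unfolding valid_lo_def sameblk_def by (auto simp: less_Suc_eq)
  have Tl: "Tl N ?P f0 = (\<lambda>j. [j, j]) ` {1..N}"
    unfolding Tl_def tb by (auto simp: labs2 val simp del: One_nat_def)
  have Tu: "Tu N ?P f0 = {[]}" by (auto simp: Tu_def labs_def valid_up_def)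
  have inj: "inj_on (\<lambda>j. [j, j]) {1..N}" by (auto simp: inj_on_def)
  have S: "(\<Sum>t\<in>Tl N ?P f0. monom st [c1, c2] y [a, b] t) = (\<Sum>j\<in>{1..N}. cpow st c1 (y a j) * cpow st c2 (y b j))"
    unfolding Tl sum.reindex[OF inj] o_def by (simp add: monom_Cons monom_nil)
  show ?thesis
  proof (cases "a = b")
    case True
    have g: "[a, a] \<in> Tl N ?P f0" using a Tl by auto
    have e: "[] \<in> Tu N ?P f0" using Tu by simp
    have "(\<Sum>t\<in>Tu N ?P f0. monom st [] y t []) = (\<Sum>t'\<in>Tl N ?P f0. monom st [c1, c2] y [a, a] t')"
      using R[unfolded RGr_def, THEN conjunct1, rule_format, OF f0 f0 e g] by simp
    thus ?thesis using S True Tu by (simp add: monom_nil)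
  next
    case False
    have g: "[a, b] \<in> T0l N ?P" using a b False val[of a b] by (auto simp: T0l_def labs_def simp del: One_nat_def)
    show ?thesis using R[unfolded RGr_def, THEN conjunct2, THEN conjunct2, rule_format, OF f0 g] S False by simp
  qed
qed

lemma UR_from: assumes "\<forall>q\<in>mixed_pairs. RGr st N q u" shows "UR st N u"
proof -
  have r1: "RGr st N (TCP [C1, CS] [] {{U 0, U 1}}) u" and r2: "RGr st N (TCP [CS, C1] [] {{U 0, U 1}}) u"
   and r3: "RGr st N (TCP [] [C1, CS] {{L 0, L 1}}) u" and r4: "RGr st N (TCP [] [CS, C1] {{L 0, L 1}}) u"
    using assms by (auto simp: mixed_pairs_def)
  show ?thesis unfolding UR_def
    using pair_up[OF r1] pair_up[OF r2] pair_lo[OF r3] pair_lo[OF r4] by simp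
qed



definition Arel :: "nat \<Rightarrow> tcpart \<Rightarrow> nat list \<Rightarrow> nat list \<Rightarrow> bool" where
  "Arel N p x t \<longleftrightarrow> (\<exists>f\<in>assigns N p. x \<in> Tr N p L (length (lo p)) f \<and> t \<in> Tr N p U (length (up p)) f)"

lemma tb_U: assumes "is_tcpart p" "B \<in> tblocks p" shows "\<exists>i<length (up p). U i \<in> B"
proof -
  obtain i where i: "U i \<in> B" using assms(2) by (auto simp: tblocks_def)
  have "B \<subseteq> pts p" using tc_sub assms tblocks_blks by blast
  hence "i < length (up p)" using i pts_U by blast
  thus ?thesis using i by blast
qed
lemma tb_L: assumes "is_tcpart p" "B \<in> tblocks p" shows "\<exists>i<length (lo p). L i \<in> B"
proof -
  obtain i where i: "L i \<in> B" using assms(2) by (auto simp: tblocks_def)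
  have "B \<subseteq> pts p" using tc_sub assms tblocks_blks by blast
  hence "i < length (lo p)" using i pts_L by blast
  thus ?thesis using i by blast
qed

lemma extractf: assumes tc: "is_tcpart p" and hB: "\<forall>B\<in>tblocks p. \<exists>i<n. C i \<in> B"
  and t: "t \<in> labs N n" and v: "validr p C t"
  shows "\<exists>f\<in>assigns N p. t \<in> Tr N p C n f"
proof -
  define f where "f = (\<lambda>B. if B \<in> tblocks p then t ! (SOME i. i < n \<and> C i \<in> B) else undefined)"
  have lt: "length t = n" using t by (simp add: labs_def)
  have sm: "(SOME i. i < n \<and> C i \<in> B) < n \<and> C (SOME i. i < n \<and> C i \<in> B) \<in> B" if "B \<in> tblocks p" for B
  proof -
    have ex: "\<exists>i. i < n \<and> C i \<in> B" using hB that by blast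
    show ?thesis using someI_ex[OF ex] .
  qed
  have fa: "f \<in> assigns N p"
    unfolding assigns_def
  proof (rule PiE_I)
    fix B assume B: "B \<in> tblocks p"
    have "t ! (SOME i. i < n \<and> C i \<in> B) \<in> set t" using sm[OF B] lt by simp
    thus "f B \<in> {1..N}" using B t by (auto simp: f_def labs_def)
  qed (simp add: f_def)
  have "t \<in> Tr N p C n f"
    unfolding Tr_def
  proof (intro CollectI conjI ballI allI impI)
    show "t \<in> labs N n" by fact
    show "validr p C t" by fact
    fix B i assume B: "B \<in> tblocks p" and i: "i < length t" and Ci: "C i \<in> B"
    have "sameblk p (C i) (C (SOME i. i < n \<and> C i \<in> B))"
      using sm[OF B] Ci B unfolding sameblk_def tblocks_def by blast
    thus "t ! i = f B" using v i sm[OF B] lt B unfolding validr_def f_def by simp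
  qed
  thus ?thesis using fa by blast
qed

lemma uniq: assumes hB: "\<forall>B\<in>tblocks p. \<exists>i<n. C i \<in> B" and f: "f \<in> assigns N p" and g: "g \<in> assigns N p"
  and tf: "t \<in> Tr N p C n f" and tg: "t \<in> Tr N p C n g"
  shows "f = g"
proof (rule ext)
  fix B
  show "f B = g B"
  proof (cases "B \<in> tblocks p")
    case True
    then obtain i where i: "i < n" "C i \<in> B" using hB by blast
    have ln: "length t = n" using tf by (simp add: Tr_def labs_def)
    have tf': "\<forall>B\<in>tblocks p. \<forall>i<length t. C i \<in> B \<longrightarrow> t ! i = f B" using tf by (simp add: Tr_def)
    have tg': "\<forall>B\<in>tblocks p. \<forall>i<length t. C i \<in> B \<longrightarrow> t ! i = g B" using tg by (simp add: Tr_def)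
    have il: "i < length t" using i ln by simp
    have "t ! i = f B" using tf'[rule_format, OF True il i(2)] .
    moreover have "t ! i = g B" using tg'[rule_format, OF True il i(2)] .
    ultimately show ?thesis by simp
  next
    case False
    have f': "f \<in> tblocks p \<rightarrow>\<^sub>E {1..N}" and g': "g \<in> tblocks p \<rightarrow>\<^sub>E {1..N}" using f g by (simp_all add: assigns_def)
    show ?thesis using PiE_arb[OF f' False] PiE_arb[OF g' False] by simp
  qed
qed

lemma Aset_U: assumes tc: "is_tcpart p" and f0: "f0 \<in> assigns N p" and x: "x \<in> Tr N p L (length (lo p)) f0"
  shows "{t \<in> labs N (length (up p)). Arel N p x t} = Tr N p U (length (up p)) f0"
proof -
  have hB: "\<forall>B\<in>tblocks p. \<exists>i<length (lo p). L i \<in> B" using tb_L[OF tc] by blast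
  show ?thesis
  proof (rule set_eqI, rule iffI)
    fix t assume "t \<in> {t \<in> labs N (length (up p)). Arel N p x t}"
    then obtain f where f: "f \<in> assigns N p" "x \<in> Tr N p L (length (lo p)) f" "t \<in> Tr N p U (length (up p)) f"
      unfolding Arel_def by blast
    have "f = f0" using uniq[OF hB f(1) f0 f(2) x] .
    thus "t \<in> Tr N p U (length (up p)) f0" using f by simp
  next
    fix t assume "t \<in> Tr N p U (length (up p)) f0"
    thus "t \<in> {t \<in> labs N (length (up p)). Arel N p x t}" using f0 x Tr_labs unfolding Arel_def by blast
  qed
qed

lemma Aset_L: assumes tc: "is_tcpart p" and f0: "f0 \<in> assigns N p" and t: "t \<in> Tr N p U (length (up p)) f0"
  shows "{x \<in> labs N (length (lo p)). Arel N p x t} = Tr N p L (length (lo p)) f0"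
proof -
  have hB: "\<forall>B\<in>tblocks p. \<exists>i<length (up p). U i \<in> B" using tb_U[OF tc] by blast
  show ?thesis
  proof (rule set_eqI, rule iffI)
    fix x assume "x \<in> {x \<in> labs N (length (lo p)). Arel N p x t}"
    then obtain f where f: "f \<in> assigns N p" "x \<in> Tr N p L (length (lo p)) f" "t \<in> Tr N p U (length (up p)) f"
      unfolding Arel_def by blast
    have "f = f0" using uniq[OF hB f(1) f0 f(3) t] .
    thus "x \<in> Tr N p L (length (lo p)) f0" using f by simp
  next
    fix x assume "x \<in> Tr N p L (length (lo p)) f0"
    thus "x \<in> {x \<in> labs N (length (lo p)). Arel N p x t}" using f0 t Tr_labs unfolding Arel_def by blast
  qed
qed

lemma Aset_inv1: "\<not> validr p L x \<Longrightarrow> {t \<in> labs N k. Arel N p x t} = {}"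
  by (auto simp: Arel_def Tr_def)
lemma Aset_inv2: "\<not> validr p U t \<Longrightarrow> {x \<in> labs N l. Arel N p x t} = {}"
  by (auto simp: Arel_def Tr_def)

definition MatRel :: "('a::ring_1 \<Rightarrow> 'a) \<Rightarrow> nat \<Rightarrow> tcpart \<Rightarrow> (nat \<Rightarrow> nat \<Rightarrow> 'a) \<Rightarrow> bool" where
  "MatRel st N p y \<longleftrightarrow> (\<forall>x\<in>labs N (length (lo p)). \<forall>g\<in>labs N (length (up p)).
     (\<Sum>t\<in>{t \<in> labs N (length (up p)). Arel N p x t}. monom st (up p) y t g) =
     (\<Sum>t'\<in>{t' \<in> labs N (length (lo p)). Arel N p t' g}. monom st (lo p) y x t'))"

definition MatRelT :: "('a::ring_1 \<Rightarrow> 'a) \<Rightarrow> nat \<Rightarrow> tcpart \<Rightarrow> (nat \<Rightarrow> nat \<Rightarrow> 'a) \<Rightarrow> bool" where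
  "MatRelT st N p y \<longleftrightarrow> (\<forall>r\<in>labs N (length (up p)). \<forall>s\<in>labs N (length (lo p)).
     (\<Sum>x\<in>{x \<in> labs N (length (lo p)). Arel N p x r}. monom st (lo p) y x s) =
     (\<Sum>g\<in>{g \<in> labs N (length (up p)). Arel N p s g}. monom st (up p) y r g))"

lemma M1: assumes tc: "is_tcpart p" and R: "RGr st N p y" shows "MatRel st N p y"
  unfolding MatRel_def
proof (intro ballI)
  note R' = R[unfolded RGr_Tr]
  fix x g assume x: "x \<in> labs N (length (lo p))" and g: "g \<in> labs N (length (up p))"
  have hU: "\<forall>B\<in>tblocks p. \<exists>i<length (up p). U i \<in> B" using tb_U[OF tc] by blast
  have hL: "\<forall>B\<in>tblocks p. \<exists>i<length (lo p). L i \<in> B" using tb_L[OF tc] by blast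
  show "(\<Sum>t\<in>{t \<in> labs N (length (up p)). Arel N p x t}. monom st (up p) y t g) =
        (\<Sum>t'\<in>{t' \<in> labs N (length (lo p)). Arel N p t' g}. monom st (lo p) y x t')"
  proof (cases "validr p L x")
    case vx: True
    obtain f0 where f0: "f0 \<in> assigns N p" "x \<in> Tr N p L (length (lo p)) f0" using extractf[OF tc hL x vx] by blast
    show ?thesis
    proof (cases "validr p U g")
      case vg: True
      obtain g0 where g0: "g0 \<in> assigns N p" "g \<in> Tr N p U (length (up p)) g0" using extractf[OF tc hU g vg] by blast
      show ?thesis unfolding Aset_U[OF tc f0] Aset_L[OF tc g0]
        using R'[THEN conjunct1, rule_format, OF f0(1) g0 f0(2)] .
    next
      case vg: False
      show ?thesis unfolding Aset_U[OF tc f0] Aset_inv2[OF vg]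
        using R'[THEN conjunct2, THEN conjunct1, rule_format, OF f0(1)] g vg by simp
    qed
  next
    case vx: False
    show ?thesis
    proof (cases "validr p U g")
      case vg: True
      obtain g0 where g0: "g0 \<in> assigns N p" "g \<in> Tr N p U (length (up p)) g0" using extractf[OF tc hU g vg] by blast
      show ?thesis unfolding Aset_inv1[OF vx] Aset_L[OF tc g0]
        using R'[THEN conjunct2, THEN conjunct2, rule_format, OF g0(1)] x vx by simp
    next
      case vg: False
      show ?thesis unfolding Aset_inv1[OF vx] Aset_inv2[OF vg] by simp
    qed
  qed
qed

lemma M2: assumes tc: "is_tcpart p" and M: "MatRelT st N p y" shows "RGr st N p (\<lambda>i j. y j i)"
proof -
  have d: "disjp p" using tc tc_disj by blast
  note M' = M[unfolded MatRelT_def]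
  show ?thesis unfolding RGr_Tr monom_T[where y=y]
  proof (intro conjI ballI)
    fix f g \<gamma> \<gamma>' assume f: "f \<in> assigns N p" and g: "g \<in> assigns N p"
      and ga: "\<gamma> \<in> Tr N p U (length (up p)) g" and gb: "\<gamma>' \<in> Tr N p L (length (lo p)) f"
    have "(\<Sum>x\<in>Tr N p L (length (lo p)) g. monom st (lo p) y x \<gamma>') = (\<Sum>g'\<in>Tr N p U (length (up p)) f. monom st (up p) y \<gamma> g')"
      using M'[rule_format, OF Tr_labs[OF ga] Tr_labs[OF gb]] unfolding Aset_L[OF tc g ga] Aset_U[OF tc f gb] .
    thus "(\<Sum>t\<in>Tr N p U (length (up p)) f. monom st (up p) y \<gamma> t) = (\<Sum>t'\<in>Tr N p L (length (lo p)) g. monom st (lo p) y t' \<gamma>')"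
      by simp
  next
    fix f \<gamma> assume f: "f \<in> assigns N p" and ga: "\<gamma> \<in> {t \<in> labs N (length (up p)). \<not> validr p U t}"
    have N: "N \<ge> 1"
    proof (rule ccontr)
      assume "\<not> N \<ge> 1" hence "N = 0" by simp
      hence "\<gamma> = []" using ga labs0 by blast
      thus False using ga by (simp add: validr_def)
    qed
    obtain s where s: "s \<in> Tr N p L (length (lo p)) f" using Tr_ne[OF d f N] by blast
    have vg: "\<not> validr p U \<gamma>" using ga by simp
    show "(\<Sum>t\<in>Tr N p U (length (up p)) f. monom st (up p) y \<gamma> t) = 0"
      using M'[rule_format, of \<gamma> s] ga Tr_labs[OF s] unfolding Aset_inv2[OF vg] Aset_U[OF tc f s] by simp
  next
    fix g \<gamma>' assume g: "g \<in> assigns N p" and ga: "\<gamma>' \<in> {t \<in> labs N (length (lo p)). \<not> validr p L t}"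
    have N: "N \<ge> 1"
    proof (rule ccontr)
      assume "\<not> N \<ge> 1" hence "N = 0" by simp
      hence "\<gamma>' = []" using ga labs0 by blast
      thus False using ga by (simp add: validr_def)
    qed
    obtain r where r: "r \<in> Tr N p U (length (up p)) g" using Tr_ne[OF d g N] by blast
    have vg: "\<not> validr p L \<gamma>'" using ga by simp
    show "(\<Sum>t'\<in>Tr N p L (length (lo p)) g. monom st (lo p) y t' \<gamma>') = 0"
      using M'[rule_format, of r \<gamma>'] ga Tr_labs[OF r] unfolding Aset_inv1[OF vg] Aset_L[OF tc g r] by simp
  qed
qed



lemma Eprime: assumes s: "sts st" and Ur: "UR st N u" and M: "MatRel st N p u" shows "MatRelT st N p u"
proof -
  define K where "K = labs N (length (up p))"
  define Lb where "Lb = labs N (length (lo p))"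
  define V where "V = monom st (up p) u"
  define W where "W = monom st (lo p) u"
  define A where "A = Arel N p"
  have fK: "finite K" and fL: "finite Lb" by (simp_all add: K_def Lb_def finite_labs)
  have H: "(\<Sum>t\<in>K. if A x t then V t g else 0) = (\<Sum>t'\<in>Lb. if A t' g then W x t' else 0)" if "x \<in> Lb" "g \<in> K" for x g
    using M[unfolded MatRel_def, rule_format, of x g] that unfolding K_def Lb_def V_def W_def A_def
    by (simp add: sum.inter_filter[OF finite_labs])
  have U1': "(\<Sum>g\<in>K. V t g * st (V r g)) = (if t = r then 1 else 0)" if "t \<in> K" "r \<in> K" for t r
    using U1[OF s Ur, of t "up p" r] that by (simp add: K_def V_def)
  have U2': "(\<Sum>x\<in>Lb. st (W x a) * W x b) = (if a = b then 1 else 0)" if "a \<in> Lb" "b \<in> Lb" for a b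
    using U2[OF s Ur, of a "lo p" b] that by (simp add: Lb_def W_def)
  define Z where "Z t' r = (\<Sum>g\<in>K. if A t' g then st (V r g) else 0)" for t' r
  have S2: "(if A x r then 1 else 0) = (\<Sum>t'\<in>Lb. W x t' * Z t' r)" if x: "x \<in> Lb" and r: "r \<in> K" for x r
  proof -
    have "(if A x r then 1 else 0) = (if r \<in> K then (if A x r then 1 else 0) else 0)" using r by simp
    also have "\<dots> = (\<Sum>t\<in>K. if t = r then (if A x t then 1 else 0) else 0)"
      by (rule sum.delta[OF fK, symmetric])
    also have "\<dots> = (\<Sum>t\<in>K. if A x t then (\<Sum>g\<in>K. V t g * st (V r g)) else 0)"
      by (rule sum.cong[OF refl]) (use U1' r in auto)
    also have "\<dots> = (\<Sum>t\<in>K. \<Sum>g\<in>K. (if A x t then V t g else 0) * st (V r g))"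
      by (rule sum.cong[OF refl]) auto
    also have "\<dots> = (\<Sum>g\<in>K. (\<Sum>t\<in>K. if A x t then V t g else 0) * st (V r g))"
      by (subst sum.swap) (simp add: sum_distrib_right)
    also have "\<dots> = (\<Sum>g\<in>K. (\<Sum>t'\<in>Lb. if A t' g then W x t' else 0) * st (V r g))"
      by (rule sum.cong[OF refl]) (simp add: H[OF x])
    also have "\<dots> = (\<Sum>g\<in>K. \<Sum>t'\<in>Lb. W x t' * (if A t' g then st (V r g) else 0))"
      by (rule sum.cong[OF refl]) (simp add: sum_distrib_right, rule sum.cong[OF refl], auto)
    also have "\<dots> = (\<Sum>t'\<in>Lb. W x t' * Z t' r)"
      by (subst sum.swap) (simp add: Z_def sum_distrib_left)
    finally show ?thesis .
  qed
  have S3: "(\<Sum>x\<in>Lb. st (W x s') * (if A x r then 1 else 0)) = Z s' r" if s': "s' \<in> Lb" and r: "r \<in> K" for s' r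
  proof -
    have "(\<Sum>x\<in>Lb. st (W x s') * (if A x r then 1 else 0)) = (\<Sum>x\<in>Lb. st (W x s') * (\<Sum>t'\<in>Lb. W x t' * Z t' r))"
      by (rule sum.cong[OF refl]) (simp add: S2[OF _ r])
    also have "\<dots> = (\<Sum>t'\<in>Lb. (\<Sum>x\<in>Lb. st (W x s') * W x t') * Z t' r)"
      by (simp add: sum_distrib_left sum_distrib_right mult.assoc) (rule sum.swap)
    also have "\<dots> = (\<Sum>t'\<in>Lb. (if s' = t' then 1 else 0) * Z t' r)"
      by (rule sum.cong[OF refl]) (simp add: U2'[OF s'])
    also have "\<dots> = (\<Sum>t'\<in>Lb. if t' = s' then Z t' r else 0)" by (rule sum.cong[OF refl]) auto
    also have "\<dots> = (if s' \<in> Lb then Z s' r else 0)" by (rule sum.delta[OF fL])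
    also have "\<dots> = Z s' r" using s' by simp
    finally show ?thesis .
  qed
  have S4: "(\<Sum>x\<in>Lb. if A x r then W x s' else 0) = (\<Sum>g\<in>K. if A s' g then V r g else 0)" if s': "s' \<in> Lb" and r: "r \<in> K" for s' r
  proof -
    have "st (\<Sum>x\<in>Lb. st (W x s') * (if A x r then 1 else 0)) = st (Z s' r)" using S3[OF s' r] by simp
    moreover have "st (\<Sum>x\<in>Lb. st (W x s') * (if A x r then 1 else 0)) = (\<Sum>x\<in>Lb. if A x r then W x s' else 0)"
      unfolding sts_sum[OF s]
    proof (rule sum.cong[OF refl])
      fix x show "st (st (W x s') * (if A x r then 1 else 0)) = (if A x r then W x s' else 0)"
        by (cases "A x r") (simp_all add: sts_mult[OF s] sts_st[OF s] sts_0[OF s] sts_1[OF s])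
    qed
    moreover have "st (Z s' r) = (\<Sum>g\<in>K. if A s' g then V r g else 0)"
      unfolding Z_def sts_sum[OF s]
    proof (rule sum.cong[OF refl])
      fix g show "st (if A s' g then st (V r g) else 0) = (if A s' g then V r g else 0)"
        by (cases "A s' g") (simp_all add: sts_st[OF s] sts_0[OF s])
    qed
    ultimately show ?thesis by simp
  qed
  show ?thesis unfolding MatRelT_def
  proof (intro ballI)
    fix r s' assume r: "r \<in> labs N (length (up p))" and s': "s' \<in> labs N (length (lo p))"
    show "(\<Sum>x\<in>{x \<in> labs N (length (lo p)). Arel N p x r}. monom st (lo p) u x s') =
          (\<Sum>g\<in>{g \<in> labs N (length (up p)). Arel N p s' g}. monom st (up p) u r g)"
      using S4[of s' r] r s' unfolding K_def Lb_def V_def W_def A_def by (simp add: sum.inter_filter[OF finite_labs])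
  qed
qed



theorem lemma4p10:
  fixes st :: "'a::{real_normed_algebra_1,banach} \<Rightarrow> 'a" and iu :: 'a
    and N :: nat and u :: "nat \<Rightarrow> nat \<Rightarrow> 'a" and p :: tcpart
  assumes G: "cmqg st iu N u TYPE('b::{real_normed_algebra_1,banach})"
    and p: "is_tcpart p"
  shows "((RGr st N p u \<and> RGr st N (pcomp p (pinv p)) u \<and> RGr st N (pinv p) u)
            \<longrightarrow> RSp st N N p u)
       \<and> ((RSp st N N p u \<and> RSp st N N p (\<lambda>i j. u j i)) \<longrightarrow> RGr st N p u)
       \<and> (\<forall>Pis. (\<forall>q\<in>Pis. is_tcpart q) \<and> mixed_pairs \<subseteq> Pis
                \<and> is_GN st iu N u Pis TYPE('c::{real_normed_algebra_1,banach})
                \<and> p \<in> cat_gen Pis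
            \<longrightarrow> (RGr st N p u \<longleftrightarrow> RSp st N N p u \<and> RSp st N N p (\<lambda>i j. u j i)))"
proof (intro conjI impI allI)
  have d: "disjp p" using p tc_disj by blast
  have s: "sts st" using G unfolding cmqg_def cstar_def sts_def by blast
  show "RGr st N p u \<and> RGr st N (pcomp p (pinv p)) u \<and> RGr st N (pinv p) u \<Longrightarrow> RSp st N N p u"
    using lemB[OF d _ lemA[OF p]] by blast
  show "RSp st N N p u \<and> RSp st N N p (\<lambda>i j. u j i) \<Longrightarrow> RGr st N p u"
    using part2[OF d] by blast
  fix Pis
  assume H: "(\<forall>q\<in>Pis. is_tcpart q) \<and> mixed_pairs \<subseteq> Pis
                \<and> is_GN st iu N u Pis TYPE('c::{real_normed_algebra_1,banach}) \<and> p \<in> cat_gen Pis"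
  have Ur: "UR st N u"
    using H UR_from[of st N u] unfolding is_GN_def by blast
  show "RGr st N p u \<longleftrightarrow> RSp st N N p u \<and> RSp st N N p (\<lambda>i j. u j i)"
  proof
    assume R: "RGr st N p u"
    have RT: "RGr st N p (\<lambda>i j. u j i)" using M2[OF p Eprime[OF s Ur M1[OF p R]]] .
    have Ri: "RGr st N (pinv p) u" using lemD[OF RT] by simp
    have RiT: "RGr st N (pinv p) (\<lambda>i j. u j i)" using lemD[OF R] .
    show "RSp st N N p u \<and> RSp st N N p (\<lambda>i j. u j i)"
      using lemB[OF d R lemC[OF d R Ri]] lemB[OF d RT lemC[OF d RT RiT]] by blast
  next
    assume "RSp st N N p u \<and> RSp st N N p (\<lambda>i j. u j i)"
    thus "RGr st N p u" using part2[OF d] by blast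
  qed
qed


end
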